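(* Let $k,l$ be positive integers, let $\square_{k,l}$ be the rectangular Young diagram with $k$ rows and $l$ columns, and let $V_{k,l}\subset\mathrm{Fun}_0(\mathbb Y)$ be the finite-dimensional subspace spanned by the vectors $\delta_\lambda$ with $\lambda\subseteq\square_{k,l}$. If $z=k$ and $z'=-l$, then $V_{k,l}$ is invariant under the operators $E,F,H$ defined in the context, and the resulting action of $\mathfrak{sl}(2,\mathbb C)$ on $V_{k,l}$ lifts to a representation of the group $SL(2,\mathbb C)$.
   Context: $\mathbb Y$ is the set of Young diagrams (including $\varnothing$), $|\lambda|$ the number of boxes; $\mu\nearrow\lambda$ (equivalently $\lambda\searrow\mu$) means $\mu\subset\lambda$, $|\lambda|=|\mu|+1$. For a skew diagram $\theta$, $(z)_\theta=\prod_{(i,j)\in\theta}(z+j-i)$, where $(i,j)$ is the box in row $i$ and column $j$. $\mathrm{Fun}_0(\mathbb Y)$ is the complex vector space of finitely supported functions on $\mathbb Y$ with basis $\{\delta_\lambda\}$ (indicator functions). For complex $z,z'$ define operators on $\mathrm{Fun}_0(\mathbb Y)$: $E\delta_\lambda=\sum_{\lambda^\bullet\searrow\lambda}(z)_{\lambda^\bullet/\lambda}(z')_{\lambda^\bullet/\lambda}\delta_{\lambda^\bullet}$, $F\delta_\lambda=-\sum_{\lambda_\bullet\nearrow\lambda}\delta_{\lambda_\bullet}$, $H\delta_\lambda=(zz'+2|\lambda|)\delta_\lambda$. These satisfy $[H,E]=2E$, $[H,F]=-2F$, $[E,F]=H$, hence define a representation of $\mathfrak{sl}(2,\mathbb C)$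 (with $E,F,H$ corresponding to the standard basis matrices $\begin{pmatrix}0&1\\0&0\end{pmatrix},\begin{pmatrix}0&0\\1&0\end{pmatrix},\begin{pmatrix}1&0\\0&-1\end{pmatrix}$). *)

theory Defs
  imports "HOL-Analysis.Analysis"
begin

text \<open>Young diagrams are modelled as finite sets of boxes (i,j), i = row, j = column,
  indices starting at 1, closed under moving up/left.\<close>

type_synonym diagram = "(nat \<times> nat) set"

definition young :: "diagram \<Rightarrow> bool" where
  "young Y \<longleftrightarrow> finite Y \<and>
     (\<forall>i j. (i, j) \<in> Y \<longrightarrow> 1 \<le> i \<and> 1 \<le> j \<and>
        (\<forall>i' j'. 1 \<le> i' \<and> i' \<le> i \<and> 1 \<le> j' \<and> j' \<le> j \<longrightarrow> (i', j') \<in> Y))"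

definition size_diag :: "diagram \<Rightarrow> nat" where
  "size_diag Y = card Y"

definition covers :: "diagram \<Rightarrow> diagram \<Rightarrow> bool" (infix "\<nearrow>" 50) where
  "mu \<nearrow> lam \<longleftrightarrow> young mu \<and> young lam \<and> mu \<subseteq> lam \<and> card lam = card mu + 1"

definition content :: "nat \<times> nat \<Rightarrow> int" where
  "content b = int (snd b) - int (fst b)"

definition gen_poch :: "complex \<Rightarrow> diagram \<Rightarrow> complex" where
  "gen_poch z theta = (\<Prod>b\<in>theta. z + of_int (content b))"

text \<open>Fun_0(Y): finitely supported complex functions on Young diagrams
  (extended by zero to non-diagrams).\<close>
definition Fun0 :: "(diagram \<Rightarrow> complex) set" where
  "Fun0 = {f. finite {mu. f mu \<noteq> 0} \<and> (\<forall>mu. f mu \<noteq> 0 \<longrightarrow> young mu)}"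

text \<open>The operators E, F, H, written on coefficient functions:
  f = sum_lambda f(lambda) delta_lambda.\<close>
definition opE :: "complex \<Rightarrow> complex \<Rightarrow> (diagram \<Rightarrow> complex) \<Rightarrow> diagram \<Rightarrow> complex" where
  "opE z z' f mu = (\<Sum>lam\<in>{lam. lam \<nearrow> mu}.
      gen_poch z (mu - lam) * gen_poch z' (mu - lam) * f lam)"

definition opF :: "(diagram \<Rightarrow> complex) \<Rightarrow> diagram \<Rightarrow> complex" where
  "opF f mu = - (\<Sum>lam\<in>{lam. mu \<nearrow> lam}. f lam)"

definition opH :: "complex \<Rightarrow> complex \<Rightarrow> (diagram \<Rightarrow> complex) \<Rightarrow> diagram \<Rightarrow> complex" where
  "opH z z' f mu = (z * z' + 2 * of_nat (size_diag mu)) * f mu"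

definition rect :: "nat \<Rightarrow> nat \<Rightarrow> diagram" where
  "rect k l = {1..k} \<times> {1..l}"

definition Vkl :: "nat \<Rightarrow> nat \<Rightarrow> (diagram \<Rightarrow> complex) set" where
  "Vkl k l = {f. \<forall>mu. f mu \<noteq> 0 \<longrightarrow> young mu \<and> mu \<subseteq> rect k l}"

definition SL2 :: "(complex^2^2) set" where
  "SL2 = {A. det A = 1}"

definition expE :: "complex \<Rightarrow> complex^2^2" where
  "expE t = vector [vector [1, t], vector [0, 1]]"
definition expF :: "complex \<Rightarrow> complex^2^2" where
  "expF t = vector [vector [1, 0], vector [t, 1]]"
definition expH :: "complex \<Rightarrow> complex^2^2" where
  "expH t = vector [vector [exp t, 0], vector [0, exp (- t)]]"

definition is_SL2_lift ::
  "(complex^2^2 \<Rightarrow> (diagram \<Rightarrow> complex) \<Rightarrow> diagram \<Rightarrow> complex) \<Rightarrow> (diagram \<Rightarrow> complex) set \<Rightarrow>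
   ((diagram \<Rightarrow> complex) \<Rightarrow> diagram \<Rightarrow> complex) \<Rightarrow>
   ((diagram \<Rightarrow> complex) \<Rightarrow> diagram \<Rightarrow> complex) \<Rightarrow>
   ((diagram \<Rightarrow> complex) \<Rightarrow> diagram \<Rightarrow> complex) \<Rightarrow> bool" where
  "is_SL2_lift rho V XE XF XH \<longleftrightarrow>
     (\<forall>A\<in>SL2. \<forall>f\<in>V. rho A f \<in> V) \<and>
     (\<forall>A\<in>SL2. \<forall>f\<in>V. \<forall>g\<in>V. rho A (\<lambda>mu. f mu + g mu) = (\<lambda>mu. rho A f mu + rho A g mu)) \<and>
     (\<forall>A\<in>SL2. \<forall>f\<in>V. \<forall>c. rho A (\<lambda>mu. c * f mu) = (\<lambda>mu. c * rho A f mu)) \<and>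
     (\<forall>f\<in>V. rho (mat 1) f = f) \<and>
     (\<forall>A\<in>SL2. \<forall>B\<in>SL2. \<forall>f\<in>V. rho (A ** B) f = rho A (rho B f)) \<and>
     (\<forall>f\<in>V. \<forall>mu. continuous_on SL2 (\<lambda>A. rho A f mu)) \<and>
     (\<forall>f\<in>V. \<forall>mu. ((\<lambda>t. rho (expE t) f mu) has_field_derivative XE f mu) (at 0)) \<and>
     (\<forall>f\<in>V. \<forall>mu. ((\<lambda>t. rho (expF t) f mu) has_field_derivative XF f mu) (at 0)) \<and>
     (\<forall>f\<in>V. \<forall>mu. ((\<lambda>t. rho (expH t) f mu) has_field_derivative XH f mu) (at 0))"

end

theory Submission
  imports Defs "HOL-Computational_Algebra.Polynomial"
begin

definition DD :: "nat \<Rightarrow> nat \<Rightarrow> diagram set" where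
  "DD k l = {mu. young mu \<and> mu \<subseteq> rect k l}"

definition len :: "diagram \<Rightarrow> nat \<Rightarrow> nat" where
  "len mu r = card {c. (r, c) \<in> mu}"

lemma young_finite: "young mu \<Longrightarrow> finite mu"
  by (simp add: young_def)

lemma young_pos: "young mu \<Longrightarrow> (i, j) \<in> mu \<Longrightarrow> 1 \<le> i \<and> 1 \<le> j"
  unfolding young_def by blast

lemma young_down: assumes "young mu" "(i, j) \<in> mu" "1 \<le> i'" "i' \<le> i" "1 \<le> j'" "j' \<le> j"
  shows "(i', j') \<in> mu"
proof -
  have "\<forall>i j. (i, j) \<in> mu \<longrightarrow> 1 \<le> i \<and> 1 \<le> j \<and>
        (\<forall>i' j'. 1 \<le> i' \<and> i' \<le> i \<and> 1 \<le> j' \<and> j' \<le> j \<longrightarrow> (i', j') \<in> mu)"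
    using assms(1) unfolding young_def by (rule conjunct2)
  hence "\<forall>i' j'. 1 \<le> i' \<and> i' \<le> i \<and> 1 \<le> j' \<and> j' \<le> j \<longrightarrow> (i', j') \<in> mu"
    using assms(2) by blast
  thus ?thesis using assms(3-) by blast
qed

lemma row_finite: "young mu \<Longrightarrow> finite {c. (r, c) \<in> mu}"
proof -
  assume y: "young mu"
  have "{c. (r, c) \<in> mu} \<subseteq> snd ` mu" by force
  thus ?thesis using young_finite[OF y] finite_subset by blast
qed

lemma young_row: assumes y: "young mu" and r: "1 \<le> r"
  shows "{c. (r, c) \<in> mu} = {1..len mu r}"
proof (cases "{c. (r, c) \<in> mu} = {}")
  case True thus ?thesis by (simp add: len_def)
next
  case False
  let ?S = "{c. (r, c) \<in> mu}"
  have fin: "finite ?S" using row_finite[OF y] .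
  define M where "M = Max ?S"
  have MS: "M \<in> ?S" using Max_in[OF fin False] M_def by simp
  have "?S = {1..M}"
  proof
    show "?S \<subseteq> {1..M}"
    proof
      fix c assume c: "c \<in> ?S"
      hence "1 \<le> c" using young_pos[OF y] by blast
      moreover have "c \<le> M" using Max_ge[OF fin c] M_def by simp
      ultimately show "c \<in> {1..M}" by simp
    qed
    show "{1..M} \<subseteq> ?S"
    proof
      fix c assume c: "c \<in> {1..M}"
      have "(r, M) \<in> mu" using MS by simp
      hence "(r, c) \<in> mu" using young_down[OF y, of r M r c] c r by simp
      thus "c \<in> ?S" by simp
    qed
  qed
  thus ?thesis by (simp add: len_def)
qed

lemma mem_iff_len: assumes y: "young mu"
  shows "(r, c) \<in> mu \<longleftrightarrow> 1 \<le> r \<and> 1 \<le> c \<and> c \<le> len mu r"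
proof (cases "1 \<le> r")
  case True
  have "(r, c) \<in> mu \<longleftrightarrow> c \<in> {c. (r, c) \<in> mu}" by simp
  also have "\<dots> \<longleftrightarrow> c \<in> {1..len mu r}" using young_row[OF y True] by simp
  finally show ?thesis using True by simp
next
  case False thus ?thesis using young_pos[OF y] by auto
qed

lemma len_antimono: assumes y: "young mu" and "1 \<le> r" "r \<le> r'"
  shows "len mu r' \<le> len mu r"
proof -
  have "{c. (r', c) \<in> mu} \<subseteq> {c. (r, c) \<in> mu}"
  proof
    fix c assume "c \<in> {c. (r', c) \<in> mu}"
    hence h: "(r', c) \<in> mu" by simp
    hence "1 \<le> c" using young_pos[OF y] by simp
    hence "(r, c) \<in> mu" using young_down[OF y h, of r c] assms by simp
    thus "c \<in> {c. (r, c) \<in> mu}" by simp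
  qed
  thus ?thesis unfolding len_def using card_mono row_finite[OF y] by blast
qed

lemma len_le: assumes "mu \<in> DD k l" shows "len mu r \<le> l"
proof -
  have "{c. (r, c) \<in> mu} \<subseteq> {1..l}" using assms by (auto simp: DD_def rect_def)
  thus ?thesis unfolding len_def using card_mono[of "{1..l}"] by fastforce
qed

lemma len_zero: assumes "mu \<in> DD k l" "r > k \<or> r = 0" shows "len mu r = 0"
proof -
  have "{c. (r, c) \<in> mu} = {}" using assms by (auto simp: DD_def rect_def)
  thus ?thesis unfolding len_def by simp
qed

lemma DD_eq: assumes "mu \<in> DD k l"
  shows "mu = Sigma {1..k} (\<lambda>r. {1..len mu r})"
proof -
  have y: "young mu" using assms by (simp add: DD_def)
  show ?thesis
  proof (rule set_eqI)
    fix x :: "nat \<times> nat" obtain r c where x: "x = (r, c)" by fastforce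
    have "x \<in> mu \<Longrightarrow> r \<le> k" using assms x by (auto simp: DD_def rect_def)
    thus "x \<in> mu \<longleftrightarrow> x \<in> Sigma {1..k} (\<lambda>r. {1..len mu r})"
      using mem_iff_len[OF y, of r c] x by auto
  qed
qed

lemma card_DD: assumes "mu \<in> DD k l"
  shows "card mu = (\<Sum>r=1..k. len mu r)"
  by (subst DD_eq[OF assms]) (simp add: card_SigmaI)

definition diag :: "nat \<Rightarrow> (nat \<Rightarrow> nat) \<Rightarrow> diagram" where
  "diag k L = Sigma {1..k} (\<lambda>r. {1..L r})"

lemma diag_DD: assumes anti: "\<And>r r'. 1 \<le> r \<Longrightarrow> r \<le> r' \<Longrightarrow> r' \<le> k \<Longrightarrow> L r' \<le> L r"
  and bd: "\<And>r. 1 \<le> r \<Longrightarrow> r \<le> k \<Longrightarrow> L r \<le> l"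
  shows "diag k L \<in> DD k l"
proof -
  have "young (diag k L)" unfolding young_def diag_def
  proof (intro conjI allI impI)
    show "finite (Sigma {1..k} (\<lambda>r. {1..L r}))" by simp
  next
    fix i j assume "(i, j) \<in> Sigma {1..k} (\<lambda>r. {1..L r})"
    thus "1 \<le> i" "1 \<le> j" by auto
  next
    fix i j i' j' assume h: "(i, j) \<in> Sigma {1..k} (\<lambda>r. {1..L r})"
      "1 \<le> i' \<and> i' \<le> i \<and> 1 \<le> j' \<and> j' \<le> j"
    hence "L i \<le> L i'" using anti[of i' i] by auto
    thus "(i', j') \<in> Sigma {1..k} (\<lambda>r. {1..L r})" using h by auto
  qed
  moreover have "diag k L \<subseteq> rect k l" unfolding diag_def rect_def
  proof
    fix x assume "x \<in> Sigma {1..k} (\<lambda>r. {1..L r})"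
    then obtain r c where "x = (r, c)" "r \<in> {1..k}" "c \<in> {1..L r}" by blast
    thus "x \<in> {1..k} \<times> {1..l}" using bd[of r] by auto
  qed
  ultimately show ?thesis unfolding DD_def by blast
qed

lemma len_diag: "1 \<le> r \<Longrightarrow> r \<le> k \<Longrightarrow> len (diag k L) r = L r"
proof -
  assume "1 \<le> r" "r \<le> k"
  hence "{c. (r, c) \<in> diag k L} = {1..L r}" unfolding diag_def by auto
  thus ?thesis unfolding len_def by simp
qed

lemma DD_eq_diag: "mu \<in> DD k l \<Longrightarrow> mu = diag k (len mu)"
  unfolding diag_def by (rule DD_eq)

lemma DD_ext: assumes "mu \<in> DD k l" "nu \<in> DD k l" "\<And>r. 1 \<le> r \<Longrightarrow> r \<le> k \<Longrightarrow> len mu r = len nu r"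
  shows "mu = nu"
proof -
  have "Sigma {1..k} (\<lambda>r. {1..len mu r}) = Sigma {1..k} (\<lambda>r. {1..len nu r})"
    using assms(3) by (intro Sigma_cong) auto
  thus ?thesis using DD_eq[OF assms(1)] DD_eq[OF assms(2)] by simp
qed

lemma finite_DD: "finite (DD k l)"
proof -
  have "DD k l \<subseteq> Pow (rect k l)" by (auto simp: DD_def)
  moreover have "finite (rect k l)" by (simp add: rect_def)
  ultimately show ?thesis using finite_subset by blast
qed

lemma sum_nonzero_ex: "sum g A \<noteq> 0 \<Longrightarrow> \<exists>x\<in>A. g x \<noteq> 0"
  by (meson sum.neutral)

lemma cover_diff: assumes "lam \<nearrow> mu" shows "\<exists>b. mu - lam = {b}"
proof -
  have f: "finite mu" "lam \<subseteq> mu" "card mu = card lam + 1"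
    using assms by (auto simp: covers_def young_def)
  hence "card (mu - lam) = 1" by (simp add: card_Diff_subset finite_subset)
  thus ?thesis by (meson card_1_singletonE)
qed

lemma gen_poch_single: "gen_poch z {b} = z + of_int (content b)"
  by (simp add: gen_poch_def)

lemma opE_inv:
  assumes f: "f \<in> Vkl k l" and z: "z = of_nat k" and z': "z' = - of_nat l"
  shows "opE z z' f \<in> Vkl k l"
  unfolding Vkl_def
proof (intro CollectI allI impI)
  fix mu assume "opE z z' f mu \<noteq> 0"
  then obtain lam where lam: "lam \<nearrow> mu"
     and nz: "gen_poch z (mu - lam) * gen_poch z' (mu - lam) * f lam \<noteq> 0"
    unfolding opE_def using sum_nonzero_ex by (metis (no_types, lifting) mem_Collect_eq)
  have ym: "young mu" and sub: "lam \<subseteq> mu" using lam by (auto simp: covers_def)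
  have fl: "f lam \<noteq> 0" using nz by auto
  hence lr: "lam \<subseteq> rect k l" using f by (auto simp: Vkl_def)
  obtain b where b: "mu - lam = {b}" using cover_diff[OF lam] by blast
  have "mu \<subseteq> rect k l"
  proof (rule ccontr)
    assume "\<not> mu \<subseteq> rect k l"
    then obtain i j where ij: "(i, j) \<in> mu" "(i, j) \<notin> rect k l" by auto
    have pos: "1 \<le> i" "1 \<le> j" using young_pos[OF ym ij(1)] by auto
    have "i > k \<or> j > l" using ij(2) pos by (auto simp: rect_def)
    thus False
    proof
      assume ik: "i > k"
      have "(k + 1, 1) \<in> mu" using young_down[OF ym ij(1), of "k+1" 1] ik pos by simp
      moreover have "(k + 1, 1) \<notin> lam" using lr by (auto simp: rect_def)
      ultimately have "(k + 1, 1) \<in> mu - lam" by simp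
      hence "b = (k + 1, 1)" using b by simp
      hence "gen_poch z (mu - lam) = 0" using b z
        by (simp add: gen_poch_single content_def)
      thus False using nz by simp
    next
      assume jl: "j > l"
      have "(1, l + 1) \<in> mu" using young_down[OF ym ij(1), of 1 "l+1"] jl pos by simp
      moreover have "(1, l + 1) \<notin> lam" using lr by (auto simp: rect_def)
      ultimately have "(1, l + 1) \<in> mu - lam" by simp
      hence "b = (1, l + 1)" using b by simp
      hence "gen_poch z' (mu - lam) = 0" using b z'
        by (simp add: gen_poch_single content_def)
      thus False using nz by simp
    qed
  qed
  thus "young mu \<and> mu \<subseteq> rect k l" using ym by simp
qed

lemma opF_inv:
  assumes f: "f \<in> Vkl k l"
  shows "opF f \<in> Vkl k l"
  unfolding Vkl_def
proof (intro CollectI allI impI)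
  fix mu assume "opF f mu \<noteq> 0"
  then obtain lam where lam: "mu \<nearrow> lam" and nz: "f lam \<noteq> 0"
    unfolding opF_def using sum_nonzero_ex
    by (metis (no_types, lifting) mem_Collect_eq neg_equal_0_iff_equal)
  thus "young mu \<and> mu \<subseteq> rect k l" using f by (auto simp: Vkl_def covers_def)
qed

lemma opH_inv:
  assumes f: "f \<in> Vkl k l"
  shows "opH z z' f \<in> Vkl k l"
  using f by (auto simp: Vkl_def opH_def)

definition Tset :: "nat \<Rightarrow> nat \<Rightarrow> (nat \<Rightarrow> nat) set" where
  "Tset k l = PiE {..<k} (\<lambda>_. {..k + l - 1})"

definition inc :: "nat \<Rightarrow> diagram \<Rightarrow> nat \<Rightarrow> nat" where
  "inc k mu = (\<lambda>i. if i < k then len mu (k - i) + i else undefined)"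

definition Iset :: "nat \<Rightarrow> nat \<Rightarrow> (nat \<Rightarrow> nat) set" where
  "Iset k l = {u \<in> Tset k l. \<forall>i j. i < j \<and> j < k \<longrightarrow> u i < u j}"

lemma gap: assumes "\<And>i j. i < j \<Longrightarrow> j < k \<Longrightarrow> (g::nat\<Rightarrow>nat) i < g j" "i \<le> j" "j < k"
  shows "g i + (j - i) \<le> g j"
  using assms(2,3)
proof (induction j)
  case 0 thus ?case by simp
next
  case (Suc j)
  show ?case
  proof (cases "i = Suc j")
    case True thus ?thesis by simp
  next
    case False
    hence "i \<le> j" using Suc.prems by simp
    hence "g i + (j - i) \<le> g j" using Suc by simp
    moreover have "g j < g (Suc j)" using assms(1)[of j "Suc j"] Suc.prems by simp
    ultimately show ?thesis using \<open>i \<le> j\<close> by simp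
  qed
qed

lemma Iset_gap: "u \<in> Iset k l \<Longrightarrow> i \<le> j \<Longrightarrow> j < k \<Longrightarrow> u i + (j - i) \<le> u j"
  by (rule gap[of k u]) (auto simp: Iset_def)

lemma Iset_ge: "u \<in> Iset k l \<Longrightarrow> i < k \<Longrightarrow> i \<le> u i"
  using Iset_gap[of u k l 0 i] by simp

lemma Iset_le: assumes "u \<in> Iset k l" "i < k" shows "u i \<le> l + i"
proof -
  have "u i + (k - 1 - i) \<le> u (k - 1)" using Iset_gap[OF assms(1), of i "k-1"] assms(2) by simp
  moreover have "u (k - 1) \<le> k + l - 1" using assms by (auto simp: Iset_def Tset_def PiE_def Pi_def)
  ultimately show ?thesis using assms(2) by simp
qed

lemma Iset_T: "u \<in> Iset k l \<Longrightarrow> u \<in> Tset k l" by (simp add: Iset_def)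

lemma Tset_undef: "u \<in> Tset k l \<Longrightarrow> \<not> i < k \<Longrightarrow> u i = undefined"
  by (auto simp: Tset_def PiE_def extensional_def)

lemma Tset_le: "u \<in> Tset k l \<Longrightarrow> i < k \<Longrightarrow> u i \<le> k + l - 1"
  by (auto simp: Tset_def PiE_def Pi_def)

lemma Tset_eqI: "u \<in> Tset k l \<Longrightarrow> v \<in> Tset k l \<Longrightarrow> (\<And>i. i < k \<Longrightarrow> u i = v i) \<Longrightarrow> u = v"
  unfolding Tset_def by (rule PiE_ext) auto

lemma inc_T: assumes mu: "mu \<in> DD k l" shows "inc k mu \<in> Tset k l"
  unfolding Tset_def PiE_iff
proof (intro conjI ballI)
  fix i assume i: "i \<in> {..<k}"
  have "len mu (k - i) \<le> l" using len_le[OF mu] .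
  thus "inc k mu i \<in> {..k + l - 1}" using i by (simp add: inc_def)
next
  show "inc k mu \<in> extensional {..<k}" by (simp add: inc_def extensional_def)
qed

lemma inc_I: assumes mu: "mu \<in> DD k l" shows "inc k mu \<in> Iset k l"
proof -
  have y: "young mu" using mu by (simp add: DD_def)
  have "inc k mu i < inc k mu j" if "i < j" "j < k" for i j
  proof -
    have "len mu (k - j) \<ge> len mu (k - i)" using len_antimono[OF y, of "k-j" "k-i"] that by simp
    thus ?thesis using that by (simp add: inc_def)
  qed
  thus ?thesis using inc_T[OF mu] by (simp add: Iset_def)
qed

lemma inc_lt: "i < k \<Longrightarrow> inc k mu i = len mu (k - i) + i"
  by (simp add: inc_def)

lemma inc_inj: assumes "mu \<in> DD k l" "nu \<in> DD k l" "inc k mu = inc k nu" shows "mu = nu"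
proof (rule DD_ext[OF assms(1,2)])
  fix r assume r: "1 \<le> r" "r \<le> k"
  have "inc k mu (k - r) = inc k nu (k - r)" using assms(3) by simp
  thus "len mu r = len nu r" using r by (simp add: inc_def)
qed

definition Lof :: "nat \<Rightarrow> (nat \<Rightarrow> nat) \<Rightarrow> nat \<Rightarrow> nat" where
  "Lof k u = (\<lambda>r. u (k - r) - (k - r))"

lemma diag_of: assumes u: "u \<in> Iset k l"
  shows "diag k (Lof k u) \<in> DD k l" "inc k (diag k (Lof k u)) = u"
proof -
  show D: "diag k (Lof k u) \<in> DD k l"
  proof (rule diag_DD)
    fix r r' assume h: "1 \<le> r" "r \<le> r'" "r' \<le> k"
    have "u (k - r') + ((k - r) - (k - r')) \<le> u (k - r)"
      using Iset_gap[OF u, of "k - r'" "k - r"] h by simp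
    thus "Lof k u r' \<le> Lof k u r" using h by (simp add: Lof_def)
  next
    fix r assume h: "1 \<le> r" "r \<le> k"
    thus "Lof k u r \<le> l" using Iset_le[OF u, of "k - r"] by (simp add: Lof_def)
  qed
  show "inc k (diag k (Lof k u)) = u"
  proof (rule Tset_eqI[OF inc_T[OF D] Iset_T[OF u]])
    fix i assume i: "i < k"
    have "len (diag k (Lof k u)) (k - i) = Lof k u (k - i)" using i by (intro len_diag) auto
    also have "\<dots> = u i - i" using i by (simp add: Lof_def)
    finally show "inc k (diag k (Lof k u)) i = u i" using i Iset_ge[OF u i] by (simp add: inc_def)
  qed
qed

lemma Iset_inc: assumes "u \<in> Iset k l" shows "\<exists>mu \<in> DD k l. u = inc k mu"
  using diag_of[OF assms] by (intro bexI[of _ "diag k (Lof k u)"]) simp_all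

lemma perm_id:
  assumes u: "u \<in> Iset k l" and s: "s permutes {..<k}"
    and w: "\<And>i j. i < j \<Longrightarrow> j < k \<Longrightarrow> u (s i) \<le> u (s j)"
  shows "s = id"
proof -
  have sk: "i < k \<Longrightarrow> s i < k" for i using permutes_in_image[OF s] by simp
  have uinc: "i < j \<Longrightarrow> j < k \<Longrightarrow> u i < u j" for i j using u by (simp add: Iset_def)
  have mono: "s i < s j" if "i < j" "j < k" for i j
  proof -
    have "s i \<noteq> s j" using permutes_inj[OF s] that by (simp add: inj_eq)
    moreover have "\<not> s j < s i"
      using uinc[of "s j" "s i"] sk[of i] that w[of i j] by auto
    ultimately show ?thesis by simp
  qed
  have "s i = i" if i: "i < k" for i
  proof -
    have "s 0 + (i - 0) \<le> s i" using gap[of k s 0 i] mono i by simp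
    moreover have "s i + (k - 1 - i) \<le> s (k - 1)" using gap[of k s i "k - 1"] mono i by simp
    moreover have "s (k - 1) < k" using sk i by simp
    ultimately show ?thesis by simp
  qed
  moreover have "s i = i" if "\<not> i < k" for i using permutes_not_in[OF s] that by simp
  ultimately show ?thesis by (intro ext) (metis id_apply)
qed

lemma sort_ex:
  assumes t: "t \<in> Tset k l" and inj: "inj_on t {..<k}"
  shows "\<exists>u \<in> Iset k l. \<exists>s. s permutes {..<k} \<and> t = u \<circ> s"
proof -
  let ?X = "t ` {..<k}"
  obtain xs where xs: "sorted_wrt (<) xs" "set xs = ?X" "length xs = card ?X"
    using sorted_list_of_set.finite_set_strict_sorted[of ?X] by auto
  have lx: "length xs = k" using xs(3) card_image[OF inj] by simp
  define u where "u = (\<lambda>i. if i < k then xs ! i else undefined)"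
  have uX: "i < k \<Longrightarrow> u i \<in> ?X" for i
  proof -
    assume "i < k" hence "xs ! i \<in> set xs" using lx by simp
    thus "u i \<in> ?X" using xs(2) \<open>i < k\<close> by (simp add: u_def)
  qed
  have uT: "u \<in> Tset k l" unfolding Tset_def PiE_iff
  proof (intro conjI ballI)
    fix i assume "i \<in> {..<k}"
    then obtain j where "j < k" "u i = t j" using uX[of i] by auto
    thus "u i \<in> {..k + l - 1}" using Tset_le[OF t] by simp
  qed (simp add: u_def extensional_def)
  have uinc: "u i < u j" if "i < j" "j < k" for i j
    using sorted_wrt_nth_less[OF xs(1), of i j] that lx by (simp add: u_def)
  have uI: "u \<in> Iset k l" using uT uinc by (simp add: Iset_def)
  have uinj: "inj_on u {..<k}"
  proof (rule inj_onI)
    fix i j assume h: "i \<in> {..<k}" "j \<in> {..<k}" "u i = u j"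
    show "i = j"
    proof (rule ccontr)
      assume "i \<noteq> j"
      hence "i < j \<or> j < i" by arith
      thus False using uinc[of i j] uinc[of j i] h by auto
    qed
  qed
  have uim: "u ` {..<k} = ?X"
  proof
    show "u ` {..<k} \<subseteq> ?X" using uX by auto
    show "?X \<subseteq> u ` {..<k}"
    proof
      fix x assume "x \<in> ?X"
      hence "x \<in> set xs" using xs(2) by simp
      then obtain i where "i < length xs" "xs ! i = x" by (auto simp: in_set_conv_nth)
      thus "x \<in> u ` {..<k}" using lx by (auto simp: u_def image_iff intro!: bexI[of _ i])
    qed
  qed
  have bu: "bij_betw u {..<k} ?X" using uinj uim by (simp add: bij_betw_def)
  have bt: "bij_betw t {..<k} ?X" using inj by (simp add: bij_betw_def)
  define s where "s = (\<lambda>i. if i < k then the_inv_into {..<k} u (t i) else i)"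
  have bs: "bij_betw s {..<k} {..<k}"
  proof -
    have "bij_betw (the_inv_into {..<k} u \<circ> t) {..<k} {..<k}"
      using bij_betw_trans[OF bt bij_betw_the_inv_into[OF bu]] .
    moreover have "bij_betw s {..<k} {..<k} = bij_betw (the_inv_into {..<k} u \<circ> t) {..<k} {..<k}"
      by (rule bij_betw_cong) (simp add: s_def)
    ultimately show ?thesis by simp
  qed
  have sp: "s permutes {..<k}" by (rule bij_imp_permutes[OF bs]) (simp add: s_def)
  have "t = u \<circ> s"
  proof
    fix i show "t i = (u \<circ> s) i"
    proof (cases "i < k")
      case True
      have "t i \<in> u ` {..<k}" using uim True by auto
      thus ?thesis using True f_the_inv_into_f[OF uinj] by (simp add: s_def)
    next
      case False
      thus ?thesis using Tset_undef[OF t False] Tset_undef[OF uT False] by (simp add: s_def)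
    qed
  qed
  thus ?thesis using uI sp by blast
qed

definition Mcoef :: "nat \<Rightarrow> complex \<Rightarrow> complex \<Rightarrow> complex \<Rightarrow> complex \<Rightarrow> nat \<Rightarrow> nat \<Rightarrow> complex" where
  "Mcoef m a b c d s u = (\<Sum>i\<le>s. \<Sum>j\<le>m - s. if i + j = u then
      of_nat (s choose i) * of_nat ((m - s) choose j) * a ^ i * b ^ (s - i) * c ^ j * d ^ (m - s - j) else 0)"

definition Mc :: "nat \<Rightarrow> complex^2^2 \<Rightarrow> nat \<Rightarrow> nat \<Rightarrow> complex" where
  "Mc m A s u = Mcoef m (A$1$1) (A$1$2) (A$2$1) (A$2$2) s u"

lemma ifz: "(if P then a else 0) * b = (if P then a * b else (0::complex))" by simp

lemma swap3: "(\<Sum>i\<in>A. \<Sum>j\<in>B. \<Sum>u\<in>U. F i j u) = (\<Sum>u\<in>U. \<Sum>i\<in>A. \<Sum>j\<in>B. (F i j u :: complex))"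
proof -
  have "(\<Sum>i\<in>A. \<Sum>j\<in>B. \<Sum>u\<in>U. F i j u) = (\<Sum>i\<in>A. \<Sum>u\<in>U. \<Sum>j\<in>B. F i j u)"
    by (rule sum.cong[OF refl], rule sum.swap)
  also have "\<dots> = (\<Sum>u\<in>U. \<Sum>i\<in>A. \<Sum>j\<in>B. F i j u)" by (rule sum.swap)
  finally show ?thesis .
qed

lemma gen:
  fixes a b c d x y :: complex
  assumes sm: "s \<le> m"
  shows "(a*x + b*y)^s * (c*x + d*y)^(m-s) = (\<Sum>u\<le>m. Mcoef m a b c d s u * x^u * y^(m-u))"
proof -
  define C where "C = (\<lambda>i j. of_nat (s choose i) * of_nat ((m - s) choose j) * a ^ i * b ^ (s - i) * c ^ j * d ^ (m - s - j) :: complex)"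
  have "(a*x + b*y)^s * (c*x + d*y)^(m-s) =
     (\<Sum>i\<le>s. of_nat (s choose i) * (a*x)^i * (b*y)^(s-i)) * (\<Sum>j\<le>m-s. of_nat ((m-s) choose j) * (c*x)^j * (d*y)^(m-s-j))"
    by (simp add: binomial_ring)
  also have "\<dots> = (\<Sum>i\<le>s. \<Sum>j\<le>m-s. (of_nat (s choose i) * (a*x)^i * (b*y)^(s-i)) * (of_nat ((m-s) choose j) * (c*x)^j * (d*y)^(m-s-j)))"
    by (rule sum_product)
  also have "\<dots> = (\<Sum>i\<le>s. \<Sum>j\<le>m-s. C i j * x^(i+j) * y^(m-(i+j)))"
  proof (intro sum.cong refl)
    fix i j assume "i \<in> {..s}" "j \<in> {..m-s}"
    hence e: "m - (i + j) = (s - i) + (m - s - j)" using sm by auto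
    show "(of_nat (s choose i) * (a*x)^i * (b*y)^(s-i)) * (of_nat ((m-s) choose j) * (c*x)^j * (d*y)^(m-s-j))
       = C i j * x^(i+j) * y^(m-(i+j))"
      unfolding e C_def by (simp add: power_add power_mult_distrib mult_ac)
  qed
  also have "\<dots> = (\<Sum>i\<le>s. \<Sum>j\<le>m-s. \<Sum>u\<le>m. if i + j = u then C i j * x^u * y^(m-u) else 0)"
  proof (intro sum.cong refl)
    fix i j assume "i \<in> {..s}" "j \<in> {..m-s}"
    hence "i + j \<in> {..m}" using sm by auto
    thus "C i j * x^(i+j) * y^(m-(i+j)) = (\<Sum>u\<le>m. if i + j = u then C i j * x^u * y^(m-u) else 0)"
      by (simp add: sum.delta)
  qed
  also have "\<dots> = (\<Sum>u\<le>m. \<Sum>i\<le>s. \<Sum>j\<le>m-s. if i + j = u then C i j * x^u * y^(m-u) else 0)"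
    by (rule swap3)
  also have "\<dots> = (\<Sum>u\<le>m. Mcoef m a b c d s u * x^u * y^(m-u))"
    unfolding Mcoef_def C_def by (simp add: sum_distrib_right ifz mult.assoc)
  finally show ?thesis .
qed

lemma coeff_unique:
  fixes p q :: "nat \<Rightarrow> complex"
  assumes "\<And>x. (\<Sum>u\<le>m. p u * x^u) = (\<Sum>u\<le>m. q u * x^u)" "u \<le> m"
  shows "p u = q u"
proof -
  define P where "P = (\<Sum>v\<le>m. monom (p v) v)"
  define Q where "Q = (\<Sum>v\<le>m. monom (q v) v)"
  have "poly P = poly Q" using assms(1) by (auto simp: P_def Q_def poly_sum poly_monom)
  hence "P = Q" by (simp add: poly_eq_poly_eq_iff)
  hence "coeff P u = coeff Q u" by simp
  thus ?thesis using assms(2) by (simp add: P_def Q_def coeff_sum coeff_monom)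
qed

lemma gen1: "s \<le> m \<Longrightarrow> (a*x + b)^s * (c*x + d)^(m-s) = (\<Sum>u\<le>m. Mcoef m a b c d s u * x^u)"
  using gen[of s m a x b 1 c d] by simp

lemma Mc_mult:
  assumes "s \<le> m" "u \<le> m"
  shows "Mc m (A ** B) s u = (\<Sum>t\<le>m. Mc m A s t * Mc m B t u)"
proof (rule coeff_unique[OF _ assms(2)])
  fix x :: complex
  define a where "a = A$1$1" define b where "b = A$1$2" define c where "c = A$2$1" define d where "d = A$2$2"
  define a' where "a' = B$1$1" define b' where "b' = B$1$2" define c' where "c' = B$2$1" define d' where "d' = B$2$2"
  have AB: "(A ** B)$1$1 = a*a' + b*c'" "(A ** B)$1$2 = a*b' + b*d'"
    "(A ** B)$2$1 = c*a' + d*c'" "(A ** B)$2$2 = c*b' + d*d'"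
    by (simp_all add: matrix_matrix_mult_def sum_2 a_def b_def c_def d_def a'_def b'_def c'_def d'_def)
  have "(\<Sum>u\<le>m. Mc m (A ** B) s u * x^u) =
      ((a*a' + b*c')*x + (a*b' + b*d'))^s * ((c*a' + d*c')*x + (c*b' + d*d'))^(m-s)"
    unfolding Mc_def AB using gen1[OF assms(1)] by simp
  also have "\<dots> = (a*(a'*x + b') + b*(c'*x + d'))^s * (c*(a'*x+b') + d*(c'*x+d'))^(m-s)"
    by (simp add: algebra_simps)
  also have "\<dots> = (\<Sum>t\<le>m. Mc m A s t * (a'*x + b')^t * (c'*x+d')^(m-t))"
    unfolding Mc_def a_def b_def c_def d_def using gen[OF assms(1)] by simp
  also have "\<dots> = (\<Sum>t\<le>m. Mc m A s t * (\<Sum>u\<le>m. Mc m B t u * x^u))"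
    by (intro sum.cong refl) (simp add: gen1 Mc_def a'_def b'_def c'_def d'_def mult.assoc)
  also have "\<dots> = (\<Sum>t\<le>m. \<Sum>u\<le>m. Mc m A s t * (Mc m B t u * x^u))"
    by (simp add: sum_distrib_left)
  also have "\<dots> = (\<Sum>u\<le>m. \<Sum>t\<le>m. Mc m A s t * (Mc m B t u * x^u))"
    by (rule sum.swap)
  also have "\<dots> = (\<Sum>u\<le>m. (\<Sum>t\<le>m. Mc m A s t * Mc m B t u) * x^u)"
    by (simp add: sum_distrib_right mult.assoc)
  finally show "(\<Sum>u\<le>m. Mc m (A ** B) s u * x^u) = (\<Sum>u\<le>m. (\<Sum>t\<le>m. Mc m A s t * Mc m B t u) * x^u)" .
qed

lemma sum_if_le: "(\<Sum>u\<le>m. (if u \<le> s then g u else 0)) = (\<Sum>u\<le>s. g u)" if "s \<le> m" for g :: "nat \<Rightarrow> complex"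
proof -
  have "(\<Sum>u\<le>m. (if u \<le> s then g u else 0)) = sum g {u \<in> {..m}. u \<le> s}"
    by (rule sum.inter_filter[symmetric]) simp
  also have "{u \<in> {..m}. u \<le> s} = {..s}" using that by auto
  finally show ?thesis .
qed

lemma Mc_id: assumes "s \<le> m" "u \<le> m" shows "Mc m (mat 1) s u = (if u = s then 1 else 0)"
proof (rule coeff_unique[OF _ assms(2)])
  fix x :: complex
  have "(\<Sum>u\<le>m. Mc m (mat 1) s u * x^u) = x^s"
    using gen1[OF assms(1), of 1 x 0 0 1] by (simp add: Mc_def mat_def)
  also have "\<dots> = (\<Sum>u\<le>m. (if u = s then 1 else 0) * x^u)"
    using assms(1) by (simp add: ifz sum.delta)
  finally show "(\<Sum>u\<le>m. Mc m (mat 1) s u * x^u) = (\<Sum>u\<le>m. (if u = s then 1 else 0) * x^u)" .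
qed

lemma Mc_E: assumes "s \<le> m" "u \<le> m"
  shows "Mc m (expE t) s u = (if u \<le> s then of_nat (s choose u) * t^(s-u) else 0)"
proof (rule coeff_unique[OF _ assms(2)])
  fix x :: complex
  have "(\<Sum>u\<le>m. Mc m (expE t) s u * x^u) = (x + t)^s"
    using gen1[OF assms(1), of 1 x t 0 1] by (simp add: Mc_def expE_def)
  also have "\<dots> = (\<Sum>u\<le>s. of_nat (s choose u) * x^u * t^(s-u))" by (rule binomial_ring)
  also have "\<dots> = (\<Sum>u\<le>s. of_nat (s choose u) * t^(s-u) * x^u)" by (simp add: mult_ac)
  also have "\<dots> = (\<Sum>u\<le>m. if u \<le> s then of_nat (s choose u) * t^(s-u) * x^u else 0)"
    by (rule sum_if_le[symmetric, OF assms(1)])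
  also have "\<dots> = (\<Sum>u\<le>m. (if u \<le> s then of_nat (s choose u) * t^(s-u) else 0) * x^u)"
    by (simp only: ifz)
  finally show "(\<Sum>u\<le>m. Mc m (expE t) s u * x^u) = (\<Sum>u\<le>m. (if u \<le> s then of_nat (s choose u) * t^(s-u) else 0) * x^u)" .
qed

lemma Mc_H: assumes "s \<le> m" "u \<le> m"
  shows "Mc m (expH t) s u = (if u = s then exp t ^ s * exp (-t) ^ (m - s) else 0)"
proof (rule coeff_unique[OF _ assms(2)])
  fix x :: complex
  have "(\<Sum>u\<le>m. Mc m (expH t) s u * x^u) = (exp t * x)^s * exp (-t) ^ (m-s)"
    using gen1[OF assms(1), of "exp t" x 0 0 "exp (-t)"] by (simp add: Mc_def expH_def)
  also have "\<dots> = (\<Sum>u\<le>m. if u = s then exp t ^ s * exp (-t) ^ (m - s) * x^u else 0)"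
    using assms(1) by (simp add: sum.delta power_mult_distrib mult_ac)
  also have "\<dots> = (\<Sum>u\<le>m. (if u = s then exp t ^ s * exp (-t) ^ (m - s) else 0) * x^u)"
    by (simp only: ifz)
  finally show "(\<Sum>u\<le>m. Mc m (expH t) s u * x^u) = (\<Sum>u\<le>m. (if u = s then exp t ^ s * exp (-t) ^ (m - s) else 0) * x^u)" .
qed

lemma Mc_F: assumes "s \<le> m" "u \<le> m"
  shows "Mc m (expF t) s u = (if s \<le> u then of_nat ((m - s) choose (u - s)) * t^(u-s) else 0)"
proof (rule coeff_unique[OF _ assms(2)])
  fix x :: complex
  have "(\<Sum>u\<le>m. Mc m (expF t) s u * x^u) = x^s * (t * x + 1)^(m-s)"
    using gen1[OF assms(1), of 1 x 0 t 1] by (simp add: Mc_def expF_def)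
  also have "\<dots> = x^s * (\<Sum>j\<le>m-s. of_nat ((m-s) choose j) * (t*x)^j)"
    using binomial_ring[of "t*x" 1 "m-s"] by simp
  also have "\<dots> = (\<Sum>j\<le>m-s. of_nat ((m-s) choose j) * t^j * x^(j+s))"
    by (simp add: sum_distrib_left power_add power_mult_distrib mult_ac)
  also have "\<dots> = (\<Sum>u\<in>{s..m}. of_nat ((m-s) choose (u-s)) * t^(u-s) * x^u)"
  proof -
    have "(\<Sum>u\<in>{0+s..(m-s)+s}. of_nat ((m-s) choose (u-s)) * t^(u-s) * x^u) =
        (\<Sum>j\<in>{0..m-s}. of_nat ((m-s) choose j) * t^j * x^(j+s))"
      by (subst sum.shift_bounds_cl_nat_ivl) simp
    thus ?thesis using assms(1) by (simp add: atLeast0AtMost)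
  qed
  also have "\<dots> = (\<Sum>u\<le>m. (if s \<le> u then of_nat ((m - s) choose (u - s)) * t^(u-s) else 0) * x^u)"
  proof -
    have "(\<Sum>u\<le>m. (if s \<le> u then of_nat ((m - s) choose (u - s)) * t^(u-s) * x^u else 0)) =
      sum (\<lambda>u. of_nat ((m - s) choose (u - s)) * t^(u-s) * x^u) {u \<in> {..m}. s \<le> u}"
      by (rule sum.inter_filter[symmetric]) simp
    also have "{u \<in> {..m}. s \<le> u} = {s..m}" by auto
    finally show ?thesis by (simp add: ifz)
  qed
  finally show "(\<Sum>u\<le>m. Mc m (expF t) s u * x^u) = (\<Sum>u\<le>m. (if s \<le> u then of_nat ((m - s) choose (u - s)) * t^(u-s) else 0) * x^u)" .
qed

definition rho0 :: "nat \<Rightarrow> nat \<Rightarrow> complex^2^2 \<Rightarrow> ((nat\<Rightarrow>nat) \<Rightarrow> complex) \<Rightarrow> (nat\<Rightarrow>nat) \<Rightarrow> complex" where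
  "rho0 k l A c t = (\<Sum>u\<in>Tset k l. (\<Prod>i<k. Mc (k+l-1) A (t i) (u i)) * c u)"

lemma finite_Tset: "finite (Tset k l)"
  by (simp add: Tset_def finite_PiE)

lemma rho0_mult:
  assumes t: "t \<in> Tset k l"
  shows "rho0 k l (A ** B) c t = rho0 k l A (rho0 k l B c) t"
proof -
  let ?m = "k + l - 1"
  have key: "(\<Prod>i<k. Mc ?m (A ** B) (t i) (u i)) =
      (\<Sum>v\<in>Tset k l. (\<Prod>i<k. Mc ?m A (t i) (v i)) * (\<Prod>i<k. Mc ?m B (v i) (u i)))"
    if u: "u \<in> Tset k l" for u
  proof -
    have "(\<Prod>i<k. Mc ?m (A ** B) (t i) (u i)) = (\<Prod>i<k. \<Sum>w\<le>?m. Mc ?m A (t i) w * Mc ?m B w (u i))"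
      by (intro prod.cong refl Mc_mult) (use Tset_le[OF t] Tset_le[OF u] in auto)
    also have "\<dots> = (\<Sum>v\<in>PiE {..<k} (\<lambda>_. {..?m}). \<Prod>i<k. Mc ?m A (t i) (v i) * Mc ?m B (v i) (u i))"
      by (rule prod_sum_PiE) auto
    also have "\<dots> = (\<Sum>v\<in>Tset k l. (\<Prod>i<k. Mc ?m A (t i) (v i)) * (\<Prod>i<k. Mc ?m B (v i) (u i)))"
      by (simp add: Tset_def prod.distrib)
    finally show ?thesis .
  qed
  have "rho0 k l A (rho0 k l B c) t =
     (\<Sum>v\<in>Tset k l. (\<Prod>i<k. Mc ?m A (t i) (v i)) * (\<Sum>u\<in>Tset k l. (\<Prod>i<k. Mc ?m B (v i) (u i)) * c u))"
    by (simp add: rho0_def)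
  also have "\<dots> = (\<Sum>v\<in>Tset k l. \<Sum>u\<in>Tset k l. (\<Prod>i<k. Mc ?m A (t i) (v i)) * (\<Prod>i<k. Mc ?m B (v i) (u i)) * c u)"
    by (simp add: sum_distrib_left mult.assoc)
  also have "\<dots> = (\<Sum>u\<in>Tset k l. \<Sum>v\<in>Tset k l. (\<Prod>i<k. Mc ?m A (t i) (v i)) * (\<Prod>i<k. Mc ?m B (v i) (u i)) * c u)"
    by (rule sum.swap)
  also have "\<dots> = (\<Sum>u\<in>Tset k l. (\<Prod>i<k. Mc ?m (A ** B) (t i) (u i)) * c u)"
  proof (rule sum.cong[OF refl])
    fix u assume u: "u \<in> Tset k l"
    show "(\<Sum>v\<in>Tset k l. (\<Prod>i<k. Mc ?m A (t i) (v i)) * (\<Prod>i<k. Mc ?m B (v i) (u i)) * c u) =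
      (\<Prod>i<k. Mc ?m (A ** B) (t i) (u i)) * c u"
      unfolding key[OF u] by (simp add: sum_distrib_right)
  qed
  finally show ?thesis by (simp add: rho0_def)
qed

lemma prod_indicator:
  "(\<Prod>i<k. (if (u::nat\<Rightarrow>nat) i = t i then 1 else 0 :: complex)) = (if \<forall>i<k. u i = t i then 1 else 0)"
proof (cases "\<forall>i<k. u i = t i")
  case True thus ?thesis by simp
next
  case False
  then obtain i where "i < k" "u i \<noteq> t i" by auto
  thus ?thesis using False by (intro trans[OF prod_zero]) auto
qed

lemma rho0_id:
  assumes t: "t \<in> Tset k l"
  shows "rho0 k l (mat 1) c t = c t"
proof -
  have "rho0 k l (mat 1) c t = (\<Sum>u\<in>Tset k l. (if u = t then c u else 0))"
    unfolding rho0_def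
  proof (rule sum.cong[OF refl])
    fix u assume u: "u \<in> Tset k l"
    have "(\<Prod>i<k. Mc (k+l-1) (mat 1) (t i) (u i)) = (\<Prod>i<k. (if u i = t i then 1 else 0 :: complex))"
      by (intro prod.cong refl Mc_id) (use Tset_le[OF t] Tset_le[OF u] in auto)
    also have "\<dots> = (if u = t then 1 else 0)"
      using Tset_eqI[OF u t] by (auto simp: prod_indicator)
    finally show "(\<Prod>i<k. Mc (k+l-1) (mat 1) (t i) (u i)) * c u = (if u = t then c u else 0)" by simp
  qed
  also have "\<dots> = c t" using t finite_Tset by (simp add: sum.delta')
  finally show ?thesis .
qed

lemma rho0_cong: "(\<And>u. u \<in> Tset k l \<Longrightarrow> c u = d u) \<Longrightarrow> rho0 k l A c t = rho0 k l A d t"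
  unfolding rho0_def by (rule sum.cong) auto

definition Alt :: "nat \<Rightarrow> nat \<Rightarrow> ((nat\<Rightarrow>nat) \<Rightarrow> complex) \<Rightarrow> bool" where
  "Alt k l c \<longleftrightarrow> (\<forall>t\<in>Tset k l. \<forall>s. s permutes {..<k} \<longrightarrow> c (t \<circ> s) = of_int (sign s) * c t)"

lemma T_comp: assumes "t \<in> Tset k l" "s permutes {..<k}" shows "t \<circ> s \<in> Tset k l"
  unfolding Tset_def PiE_iff
proof (intro conjI ballI)
  fix i assume "i \<in> {..<k}"
  hence "s i < k" using permutes_in_image[OF assms(2)] by simp
  thus "(t \<circ> s) i \<in> {..k + l - 1}" using Tset_le[OF assms(1)] by simp
next
  show "t \<circ> s \<in> extensional {..<k}"
    using permutes_not_in[OF assms(2)] Tset_undef[OF assms(1)] by (auto simp: extensional_def)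
qed

lemma bij_comp_perm: assumes "s permutes {..<k}" shows "bij_betw (\<lambda>u. u \<circ> s) (Tset k l) (Tset k l)"
proof (rule bij_betwI[where g = "\<lambda>u. u \<circ> inv s"])
  have si: "inv s permutes {..<k}" using permutes_inv[OF assms] .
  show "(\<lambda>u. u \<circ> s) \<in> Tset k l \<rightarrow> Tset k l" using T_comp[OF _ assms] by auto
  show "(\<lambda>u. u \<circ> inv s) \<in> Tset k l \<rightarrow> Tset k l" using T_comp[OF _ si] by auto
  show "u \<circ> s \<circ> inv s = u" for u using permutes_inv_o(1)[OF assms] by (simp add: comp_assoc)
  show "u \<circ> inv s \<circ> s = u" for u using permutes_inv_o(2)[OF assms] by (simp add: comp_assoc)
qed

lemma rho0_Alt: assumes c: "Alt k l c" shows "Alt k l (rho0 k l A c)"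
  unfolding Alt_def
proof (intro ballI allI impI)
  fix t s assume t: "t \<in> Tset k l" and s: "s permutes {..<k}"
  let ?m = "k + l - 1"
  have "rho0 k l A c (t \<circ> s) = (\<Sum>u\<in>Tset k l. (\<Prod>i<k. Mc ?m A (t (s i)) (u i)) * c u)"
    by (simp add: rho0_def)
  also have "\<dots> = (\<Sum>u\<in>Tset k l. (\<Prod>i<k. Mc ?m A (t (s i)) ((u \<circ> s) i)) * c (u \<circ> s))"
    by (rule sum.reindex_bij_betw[OF bij_comp_perm[OF s], symmetric])
  also have "\<dots> = (\<Sum>u\<in>Tset k l. of_int (sign s) * ((\<Prod>i<k. Mc ?m A (t i) (u i)) * c u))"
  proof (rule sum.cong[OF refl])
    fix u assume u: "u \<in> Tset k l"
    have "(\<Prod>i<k. Mc ?m A (t (s i)) ((u \<circ> s) i)) = (\<Prod>i<k. Mc ?m A (t i) (u i))"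
      using prod.permute[OF s, of "\<lambda>i. Mc ?m A (t i) (u i)"] by (simp add: comp_def)
    moreover have "c (u \<circ> s) = of_int (sign s) * c u" using c u s by (simp add: Alt_def)
    ultimately show "(\<Prod>i<k. Mc ?m A (t (s i)) ((u \<circ> s) i)) * c (u \<circ> s) =
        of_int (sign s) * ((\<Prod>i<k. Mc ?m A (t i) (u i)) * c u)" by simp
  qed
  also have "\<dots> = of_int (sign s) * rho0 k l A c t" by (simp add: rho0_def sum_distrib_left)
  finally show "rho0 k l A c (t \<circ> s) = of_int (sign s) * rho0 k l A c t" .
qed

lemma Alt_noninj: assumes c: "Alt k l c" and t: "t \<in> Tset k l" and ni: "\<not> inj_on t {..<k}"
  shows "c t = 0"
proof -
  obtain i j where ij: "i < k" "j < k" "i \<noteq> j" "t i = t j"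
    using ni unfolding inj_on_def by auto
  have p: "Transposition.transpose i j permutes {..<k}" using ij by (intro permutes_swap_id) auto
  have "t \<circ> Transposition.transpose i j = t"
  proof
    fix x show "(t \<circ> Transposition.transpose i j) x = t x"
      using ij by (cases "x = i"; cases "x = j") auto
  qed
  hence "c t = of_int (sign (Transposition.transpose i j)) * c t" using c t p unfolding Alt_def by metis
  also have "\<dots> = - c t" using ij by (simp add: sign_swap_id)
  finally show ?thesis by simp
qed

definition wt :: "nat \<Rightarrow> nat \<Rightarrow> diagram \<Rightarrow> complex" where
  "wt k l mu = (\<Prod>i<k. (-1)^(inc k mu i) * of_nat (fact (k + l - 1 - inc k mu i)))"

lemma wt_nz: "wt k l mu \<noteq> 0"
  unfolding wt_def by (simp add: prod_zero_iff)

definition PhiC :: "nat \<Rightarrow> nat \<Rightarrow> (nat \<Rightarrow> nat) \<Rightarrow> diagram \<Rightarrow> complex" where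
  "PhiC k l t mu = (\<Sum>s\<in>{s. s permutes {..<k}}. if t = inc k mu \<circ> s then of_int (sign s) * wt k l mu else 0)"

definition Phi :: "nat \<Rightarrow> nat \<Rightarrow> (diagram \<Rightarrow> complex) \<Rightarrow> (nat \<Rightarrow> nat) \<Rightarrow> complex" where
  "Phi k l f t = (\<Sum>mu\<in>DD k l. PhiC k l t mu * f mu)"

definition Psi :: "nat \<Rightarrow> nat \<Rightarrow> ((nat \<Rightarrow> nat) \<Rightarrow> complex) \<Rightarrow> diagram \<Rightarrow> complex" where
  "Psi k l c mu = (if mu \<in> DD k l then c (inc k mu) / wt k l mu else 0)"

definition rho :: "nat \<Rightarrow> nat \<Rightarrow> complex^2^2 \<Rightarrow> (diagram \<Rightarrow> complex) \<Rightarrow> diagram \<Rightarrow> complex" where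
  "rho k l A f = Psi k l (rho0 k l A (Phi k l f))"

definition weak :: "nat \<Rightarrow> (nat \<Rightarrow> nat) \<Rightarrow> bool" where
  "weak k v \<longleftrightarrow> (\<forall>i j. i < j \<and> j < k \<longrightarrow> v i \<le> v j)"

lemma PhiC_weak:
  assumes lam: "lam \<in> DD k l" and v: "weak k v"
  shows "PhiC k l v lam = (if v = inc k lam then wt k l lam else 0)"
proof -
  have "PhiC k l v lam = (\<Sum>s\<in>{s. s permutes {..<k}}. if s = id then (if v = inc k lam then wt k l lam else 0) else 0)"
    unfolding PhiC_def
  proof (rule sum.cong[OF refl])
    fix s assume s: "s \<in> {s. s permutes {..<k}}"
    show "(if v = inc k lam \<circ> s then of_int (sign s) * wt k l lam else 0) =
          (if s = id then (if v = inc k lam then wt k l lam else 0) else 0)"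
    proof (cases "v = inc k lam \<circ> s")
      case True
      have "s = id"
        by (rule perm_id[OF inc_I[OF lam]]) (use s v True in \<open>auto simp: weak_def\<close>)
      thus ?thesis using True by simp
    next
      case False thus ?thesis by auto
    qed
  qed
  also have "\<dots> = (if v = inc k lam then wt k l lam else 0)"
    by (simp add: sum.delta permutes_id finite_permutations)
  finally show ?thesis .
qed

lemma weak_I: assumes "u \<in> Iset k l" shows "weak k u"
  unfolding weak_def
proof (intro allI impI)
  fix i j assume "i < j \<and> j < k"
  hence "u i < u j" using assms by (simp add: Iset_def)
  thus "u i \<le> u j" by simp
qed

lemma Phi_weak:
  assumes v: "weak k v"
  shows "Phi k l f v = (\<Sum>lam\<in>DD k l. if v = inc k lam then wt k l lam * f lam else 0)"
  unfolding Phi_def by (rule sum.cong[OF refl]) (simp add: PhiC_weak[OF _ v])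

lemma Phi_inc:
  assumes mu: "mu \<in> DD k l"
  shows "Phi k l f (inc k mu) = wt k l mu * f mu"
proof -
  have "Phi k l f (inc k mu) = (\<Sum>lam\<in>DD k l. if lam = mu then wt k l lam * f lam else 0)"
    unfolding Phi_weak[OF weak_I[OF inc_I[OF mu]]]
    by (rule sum.cong[OF refl]) (use inc_inj[OF _ mu] in auto)
  also have "\<dots> = wt k l mu * f mu" using mu finite_DD by (simp add: sum.delta')
  finally show ?thesis .
qed

lemma Psi_Phi:
  assumes f: "f \<in> Vkl k l"
  shows "Psi k l (Phi k l f) = f"
proof
  fix mu show "Psi k l (Phi k l f) mu = f mu"
  proof (cases "mu \<in> DD k l")
    case True thus ?thesis using wt_nz by (simp add: Psi_def Phi_inc)
  next
    case False
    hence "f mu = 0" using f by (auto simp: Vkl_def DD_def)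
    thus ?thesis using False by (simp add: Psi_def)
  qed
qed

lemma comp_cancel: assumes "s permutes S" shows "(f \<circ> s = g \<circ> s) \<longleftrightarrow> f = g"
proof
  assume h: "f \<circ> s = g \<circ> s"
  show "f = g"
  proof
    fix x
    obtain y where y: "x = s y" using permutes_surj[OF assms] by (metis surjD)
    have "f (s y) = g (s y)" using h by (metis comp_apply)
    thus "f x = g x" using y by simp
  qed
next
  assume "f = g" thus "f \<circ> s = g \<circ> s" by simp
qed

lemma perm_lt: "s permutes {..<(k::nat)} \<Longrightarrow> permutation s"
  by (rule iffD2[OF permutation_permutes], rule exI[of _ "{..<k}"], simp)

lemma sign_comp: assumes "s permutes {..<(k::nat)}" "p permutes {..<k}"
  shows "sign (s \<circ> p) = sign s * sign p"
  by (rule sign_compose[OF perm_lt[OF assms(1)] perm_lt[OF assms(2)]])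

lemma PhiC_comp:
  assumes p: "p permutes {..<k}"
  shows "PhiC k l (t \<circ> p) lam = of_int (sign p) * PhiC k l t lam"
proof -
  have "PhiC k l (t \<circ> p) lam = (\<Sum>s\<in>{s. s permutes {..<k}}.
      if t \<circ> p = inc k lam \<circ> (s \<circ> p) then of_int (sign (s \<circ> p)) * wt k l lam else 0)"
    unfolding PhiC_def by (rule sum_permutations_compose_right[OF p])
  also have "\<dots> = (\<Sum>s\<in>{s. s permutes {..<k}}.
      of_int (sign p) * (if t = inc k lam \<circ> s then of_int (sign s) * wt k l lam else 0))"
  proof (rule sum.cong[OF refl])
    fix s assume s: "s \<in> {s. s permutes {..<k}}"
    have e: "(t \<circ> p = inc k lam \<circ> (s \<circ> p)) \<longleftrightarrow> t = inc k lam \<circ> s"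
      using comp_cancel[OF p, of t "inc k lam \<circ> s"] by (simp add: comp_assoc)
    show "(if t \<circ> p = inc k lam \<circ> (s \<circ> p) then of_int (sign (s \<circ> p)) * wt k l lam else 0) =
      of_int (sign p) * (if t = inc k lam \<circ> s then of_int (sign s) * wt k l lam else 0)"
      unfolding e using sign_comp[OF _ p, of s] s by simp
  qed
  also have "\<dots> = of_int (sign p) * PhiC k l t lam" by (simp add: PhiC_def sum_distrib_left)
  finally show ?thesis .
qed

lemma Phi_Alt: "Alt k l (Phi k l f)"
  unfolding Alt_def Phi_def
  by (auto simp: PhiC_comp sum_distrib_left mult.assoc)

lemma sign_sq: "of_int (sign s) * of_int (sign s) = (1::complex)"
  by (metis of_int_1 of_int_mult sign_idempotent)

lemma Phi_Psi:
  assumes c: "Alt k l c" and t: "t \<in> Tset k l"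
  shows "Phi k l (Psi k l c) t = c t"
proof -
  have termeq: "PhiC k l t lam * Psi k l c lam =
      (\<Sum>s\<in>{s. s permutes {..<k}}. if t = inc k lam \<circ> s then c t else 0)"
    if lam: "lam \<in> DD k l" for lam
  proof -
    have "PhiC k l t lam * Psi k l c lam =
      (\<Sum>s\<in>{s. s permutes {..<k}}. (if t = inc k lam \<circ> s then of_int (sign s) * wt k l lam else 0) * (c (inc k lam) / wt k l lam))"
      using lam by (simp add: PhiC_def Psi_def sum_distrib_right sum_divide_distrib)
    also have "\<dots> = (\<Sum>s\<in>{s. s permutes {..<k}}. if t = inc k lam \<circ> s then c t else 0)"
    proof (rule sum.cong[OF refl])
      fix s assume s: "s \<in> {s. s permutes {..<k}}"
      show "(if t = inc k lam \<circ> s then of_int (sign s) * wt k l lam else 0) * (c (inc k lam) / wt k l lam) =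
        (if t = inc k lam \<circ> s then c t else 0)"
      proof (cases "t = inc k lam \<circ> s")
        case True
        have "c t = of_int (sign s) * c (inc k lam)"
          using c s True inc_T[OF lam] by (simp add: Alt_def)
        thus ?thesis using True wt_nz[of k l lam] by simp
      qed simp
    qed
    finally show ?thesis .
  qed
  have "Phi k l (Psi k l c) t = (\<Sum>lam\<in>DD k l. \<Sum>s\<in>{s. s permutes {..<k}}. if t = inc k lam \<circ> s then c t else 0)"
    unfolding Phi_def by (rule sum.cong[OF refl]) (rule termeq)
  also have "\<dots> = c t"
  proof (cases "c t = 0")
    case True show ?thesis unfolding True by simp
  next
    case False
    hence inj: "inj_on t {..<k}" using Alt_noninj[OF c t] by blast
    obtain u s0 where u: "u \<in> Iset k l" and s0: "s0 permutes {..<k}" and tu: "t = u \<circ> s0"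
      using sort_ex[OF t inj] by blast
    obtain lam0 where lam0: "lam0 \<in> DD k l" and ul: "u = inc k lam0" using Iset_inc[OF u] by blast
    have uniq: "t = inc k lam \<circ> s \<longleftrightarrow> lam = lam0 \<and> s = s0"
      if lam: "lam \<in> DD k l" and s: "s permutes {..<k}" for lam s
    proof
      assume h: "t = inc k lam \<circ> s"
      define r where "r = s0 \<circ> inv s"
      have r: "r permutes {..<k}" unfolding r_def using permutes_compose[OF permutes_inv[OF s] s0] .
      have "inc k lam0 \<circ> r = (inc k lam0 \<circ> s0) \<circ> inv s" by (simp add: r_def comp_assoc)
      also have "inc k lam0 \<circ> s0 = inc k lam \<circ> s" using h tu ul by simp
      finally have "inc k lam0 \<circ> r = inc k lam \<circ> s \<circ> inv s" .
      also have "\<dots> = inc k lam" using permutes_inv_o(1)[OF s] by (simp add: comp_assoc)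
      finally have e: "inc k lam0 \<circ> r = inc k lam" .
      have "r = id"
      proof (rule perm_id[OF inc_I[OF lam0] r])
        fix i j assume "i < j" "j < k"
        hence "inc k lam i \<le> inc k lam j" using inc_I[OF lam] by (auto simp: Iset_def intro: less_imp_le)
        thus "inc k lam0 (r i) \<le> inc k lam0 (r j)" using e by (metis comp_apply)
      qed
      hence "inc k lam = inc k lam0" using e by simp
      hence "lam = lam0" using inc_inj[OF lam lam0] by simp
      moreover have "s0 = s"
      proof -
        have "s0 = s0 \<circ> inv s \<circ> s" using permutes_inv_o(2)[OF s] by (simp add: comp_assoc)
        thus ?thesis using \<open>r = id\<close> by (simp add: r_def)
      qed
      ultimately show "lam = lam0 \<and> s = s0" by simp
    next
      assume "lam = lam0 \<and> s = s0" thus "t = inc k lam \<circ> s" using tu ul by simp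
    qed
    have "(\<Sum>lam\<in>DD k l. \<Sum>s\<in>{s. s permutes {..<k}}. if t = inc k lam \<circ> s then c t else 0) =
       (\<Sum>lam\<in>DD k l. if lam = lam0 then (\<Sum>s\<in>{s. s permutes {..<k}}. if s = s0 then c t else 0) else 0)"
      by (rule sum.cong[OF refl]) (auto simp: uniq intro!: sum.cong)
    also have "\<dots> = c t" using lam0 s0 finite_DD by (simp add: sum.delta finite_permutations)
    finally show ?thesis .
  qed
  finally show ?thesis .
qed

lemma rho_V: "rho k l A f \<in> Vkl k l"
  by (auto simp: rho_def Psi_def Vkl_def DD_def split: if_splits)

lemma rho_mult:
  assumes f: "f \<in> Vkl k l"
  shows "rho k l (A ** B) f = rho k l A (rho k l B f)"
proof -
  have "rho0 k l A (Phi k l (Psi k l (rho0 k l B (Phi k l f)))) t = rho0 k l A (rho0 k l B (Phi k l f)) t" for t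
    by (rule rho0_cong) (rule Phi_Psi[OF rho0_Alt[OF Phi_Alt]])
  moreover have "t \<in> Tset k l \<Longrightarrow> rho0 k l (A ** B) (Phi k l f) t = rho0 k l A (rho0 k l B (Phi k l f)) t" for t
    by (rule rho0_mult)
  ultimately show ?thesis unfolding rho_def Psi_def
    by (auto intro!: ext simp: inc_T)
qed

lemma rho_id:
  assumes f: "f \<in> Vkl k l"
  shows "rho k l (mat 1) f = f"
proof -
  have "rho k l (mat 1) f = Psi k l (Phi k l f)"
    unfolding rho_def Psi_def by (auto intro!: ext simp: rho0_id inc_T)
  thus ?thesis using Psi_Phi[OF f] by simp
qed

lemma Phi_add: "Phi k l (\<lambda>mu. f mu + g mu) t = Phi k l f t + Phi k l g t"
  by (simp add: Phi_def distrib_left sum.distrib)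
lemma Phi_scale: "Phi k l (\<lambda>mu. c * f mu) t = c * Phi k l f t"
  by (simp add: Phi_def sum_distrib_left mult_ac)
lemma rho0_add: "rho0 k l A (\<lambda>t. f t + g t) t = rho0 k l A f t + rho0 k l A g t"
  by (simp add: rho0_def distrib_left sum.distrib)
lemma rho0_scale: "rho0 k l A (\<lambda>t. c * f t) t = c * rho0 k l A f t"
  by (simp add: rho0_def sum_distrib_left mult_ac)

lemma rho_add: "rho k l A (\<lambda>mu. f mu + g mu) = (\<lambda>mu. rho k l A f mu + rho k l A g mu)"
proof -
  have "Phi k l (\<lambda>mu. f mu + g mu) = (\<lambda>t. Phi k l f t + Phi k l g t)" by (intro ext) (rule Phi_add)
  hence "rho0 k l A (Phi k l (\<lambda>mu. f mu + g mu)) = (\<lambda>t. rho0 k l A (Phi k l f) t + rho0 k l A (Phi k l g) t)"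
    by (intro ext) (simp add: rho0_add)
  thus ?thesis by (auto intro!: ext simp: rho_def Psi_def add_divide_distrib)
qed

lemma rho_scale: "rho k l A (\<lambda>mu. c * f mu) = (\<lambda>mu. c * rho k l A f mu)"
proof -
  have "Phi k l (\<lambda>mu. c * f mu) = (\<lambda>t. c * Phi k l f t)" by (intro ext) (rule Phi_scale)
  hence "rho0 k l A (Phi k l (\<lambda>mu. c * f mu)) = (\<lambda>t. c * rho0 k l A (Phi k l f) t)"
    by (intro ext) (simp add: rho0_scale)
  thus ?thesis by (auto intro!: ext simp: rho_def Psi_def)
qed

lemma upd_T: assumes s: "s \<in> Tset k l" and j: "j < k" and v: "v \<le> k + l - 1"
  shows "s(j := v) \<in> Tset k l"
  using s j v unfolding Tset_def PiE_iff extensional_def by auto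

lemma sum_slice:
  fixes F :: "(nat \<Rightarrow> nat) \<Rightarrow> complex"
  assumes s: "s \<in> Tset k l" and j: "j < k"
  shows "(\<Sum>u\<in>Tset k l. if (\<forall>i\<in>{..<k}-{j}. u i = s i) then F u else 0) = (\<Sum>v\<le>k+l-1. F (s(j := v)))"
proof -
  let ?m = "k + l - 1"
  have "(\<Sum>u\<in>Tset k l. if (\<forall>i\<in>{..<k}-{j}. u i = s i) then F u else 0) =
        sum F {u \<in> Tset k l. \<forall>i\<in>{..<k}-{j}. u i = s i}"
    by (rule sum.inter_filter[symmetric]) (rule finite_Tset)
  also have "{u \<in> Tset k l. \<forall>i\<in>{..<k}-{j}. u i = s i} = (\<lambda>v. s(j := v)) ` {..?m}"
  proof
    show "{u \<in> Tset k l. \<forall>i\<in>{..<k}-{j}. u i = s i} \<subseteq> (\<lambda>v. s(j := v)) ` {..?m}"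
    proof
      fix u assume u: "u \<in> {u \<in> Tset k l. \<forall>i\<in>{..<k}-{j}. u i = s i}"
      have uT: "u \<in> Tset k l" using u by simp
      have "u j \<le> ?m" using Tset_le[OF uT j] .
      moreover have "u = s(j := u j)"
        by (rule Tset_eqI[OF uT upd_T[OF s j \<open>u j \<le> ?m\<close>]]) (use u in auto)
      ultimately show "u \<in> (\<lambda>v. s(j := v)) ` {..?m}" by blast
    qed
    show "(\<lambda>v. s(j := v)) ` {..?m} \<subseteq> {u \<in> Tset k l. \<forall>i\<in>{..<k}-{j}. u i = s i}"
      using upd_T[OF s j] by (auto split: if_splits)
  qed
  also have "sum F ((\<lambda>v. s(j := v)) ` {..?m}) = (\<Sum>v\<le>?m. F (s(j := v)))"
  proof (rule sum.reindex[unfolded comp_def])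
    show "inj_on (\<lambda>v. s(j := v)) {..?m}" by (rule inj_onI) (metis fun_upd_same)
  qed
  finally show ?thesis .
qed

lemma rho0_deriv:
  fixes G :: "complex \<Rightarrow> complex^2^2" and D :: "nat \<Rightarrow> nat \<Rightarrow> complex"
  assumes s: "s \<in> Tset k l"
  and dG: "\<And>a b. a \<le> k+l-1 \<Longrightarrow> b \<le> k+l-1 \<Longrightarrow> ((\<lambda>t. Mc (k+l-1) (G t) a b) has_field_derivative D a b) (at 0)"
  and G0: "\<And>a b. a \<le> k+l-1 \<Longrightarrow> b \<le> k+l-1 \<Longrightarrow> Mc (k+l-1) (G 0) a b = (if a = b then 1 else 0)"
  shows "((\<lambda>t. rho0 k l (G t) c s) has_field_derivative (\<Sum>j<k. \<Sum>v\<le>k+l-1. D (s j) v * c (s(j := v)))) (at 0)"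
proof -
  let ?m = "k + l - 1"
  have d1: "((\<lambda>t. rho0 k l (G t) c s) has_field_derivative
     (\<Sum>u\<in>Tset k l. (\<Sum>j<k. D (s j) (u j) * (\<Prod>i\<in>{..<k}-{j}. Mc ?m (G 0) (s i) (u i))) * c u)) (at 0)"
    unfolding rho0_def
  proof (rule DERIV_sum, rule DERIV_cmult_right, rule has_field_derivative_prod)
    fix u j assume u: "u \<in> Tset k l" and j: "j \<in> {..<k}"
    show "((\<lambda>t. Mc ?m (G t) (s j) (u j)) has_field_derivative D (s j) (u j)) (at 0)"
      using dG Tset_le[OF s] Tset_le[OF u] j by simp
  qed
  have val: "(\<Sum>u\<in>Tset k l. (\<Sum>j<k. D (s j) (u j) * (\<Prod>i\<in>{..<k}-{j}. Mc ?m (G 0) (s i) (u i))) * c u)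
     = (\<Sum>j<k. \<Sum>v\<le>?m. D (s j) v * c (s(j := v)))"
  proof -
    have "(\<Sum>u\<in>Tset k l. (\<Sum>j<k. D (s j) (u j) * (\<Prod>i\<in>{..<k}-{j}. Mc ?m (G 0) (s i) (u i))) * c u)
      = (\<Sum>u\<in>Tset k l. \<Sum>j<k. if (\<forall>i\<in>{..<k}-{j}. u i = s i) then D (s j) (u j) * c u else 0)"
    proof (rule sum.cong[OF refl])
      fix u assume u: "u \<in> Tset k l"
      show "(\<Sum>j<k. D (s j) (u j) * (\<Prod>i\<in>{..<k}-{j}. Mc ?m (G 0) (s i) (u i))) * c u =
        (\<Sum>j<k. if (\<forall>i\<in>{..<k}-{j}. u i = s i) then D (s j) (u j) * c u else 0)"
        unfolding sum_distrib_right
      proof (rule sum.cong[OF refl])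
        fix j assume j: "j \<in> {..<k}"
        have "(\<Prod>i\<in>{..<k}-{j}. Mc ?m (G 0) (s i) (u i)) = (\<Prod>i\<in>{..<k}-{j}. if s i = u i then 1 else 0)"
          by (rule prod.cong[OF refl], rule G0) (use Tset_le[OF s] Tset_le[OF u] in auto)
        also have "\<dots> = (if (\<forall>i\<in>{..<k}-{j}. u i = s i) then 1 else 0)"
        proof (cases "\<forall>i\<in>{..<k}-{j}. u i = s i")
          case True thus ?thesis by (simp add: prod.neutral)
        next
          case False
          then obtain i where "i \<in> {..<k}-{j}" "u i \<noteq> s i" by blast
          thus ?thesis using False by (intro trans[OF prod_zero]) auto
        qed
        finally show "D (s j) (u j) * (\<Prod>i\<in>{..<k}-{j}. Mc ?m (G 0) (s i) (u i)) * c u =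
          (if (\<forall>i\<in>{..<k}-{j}. u i = s i) then D (s j) (u j) * c u else 0)" by simp
      qed
    qed
    also have "\<dots> = (\<Sum>j<k. \<Sum>u\<in>Tset k l. if (\<forall>i\<in>{..<k}-{j}. u i = s i) then D (s j) (u j) * c u else 0)"
      by (rule sum.swap)
    also have "\<dots> = (\<Sum>j<k. \<Sum>v\<le>?m. D (s j) v * c (s(j := v)))"
    proof (rule sum.cong[OF refl])
      fix j assume j: "j \<in> {..<k}"
      show "(\<Sum>u\<in>Tset k l. if (\<forall>i\<in>{..<k}-{j}. u i = s i) then D (s j) (u j) * c u else 0) =
          (\<Sum>v\<le>?m. D (s j) v * c (s(j := v)))"
        using sum_slice[OF s, of j "\<lambda>u. D (s j) (u j) * c u"] j by simp
    qed
    finally show ?thesis .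
  qed
  show ?thesis using d1 unfolding val .
qed

lemma cont_entry: "continuous_on S (\<lambda>A::complex^2^2. A $ i $ j)"
  by (rule linear_continuous_on, rule bounded_linear_compose[OF bounded_linear_vec_nth bounded_linear_vec_nth])

lemma cont_if0: "continuous_on S f \<Longrightarrow> continuous_on S (\<lambda>x. if P then f x else (0::complex))"
  by (cases P) auto

lemma cont_Mc: "continuous_on S (\<lambda>A. Mc m A a b)"
  unfolding Mc_def Mcoef_def
  by (intro continuous_on_sum cont_if0 continuous_intros cont_entry)

lemma cont_rho0: "continuous_on S (\<lambda>A. rho0 k l A c t)"
  unfolding rho0_def by (intro continuous_intros cont_Mc)

lemma deriv_pow0:
  "((\<lambda>t::complex. C * t ^ n) has_field_derivative (if n = 1 then C else 0)) (at 0)"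
proof -
  have "((\<lambda>t::complex. C * t ^ n) has_field_derivative C * (of_nat n * (1 * 0 ^ (n - Suc 0)))) (at 0)"
    by (rule DERIV_cmult, rule DERIV_power, rule DERIV_ident)
  moreover have "C * (of_nat n * (1 * (0::complex) ^ (n - Suc 0))) = (if n = 1 then C else 0)"
  proof (cases "n = 0")
    case True thus ?thesis by simp
  next
    case False thus ?thesis by (cases "n = 1") auto
  qed
  ultimately show ?thesis by simp
qed

lemma dE: assumes "a \<le> m" "b \<le> m"
  shows "((\<lambda>t. Mc m (expE t) a b) has_field_derivative (if b + 1 = a then of_nat a else 0)) (at 0)"
proof -
  have e: "(\<lambda>t. Mc m (expE t) a b) = (\<lambda>t. if b \<le> a then of_nat (a choose b) * t^(a-b) else 0)"
    using Mc_E[OF assms] by (intro ext) simp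
  show ?thesis
  proof (cases "b \<le> a")
    case True
    have "((\<lambda>t::complex. of_nat (a choose b) * t^(a-b)) has_field_derivative (if a - b = 1 then of_nat (a choose b) else 0)) (at 0)"
      by (rule deriv_pow0)
    moreover have "(if a - b = 1 then of_nat (a choose b) else 0) = (if b + 1 = a then (of_nat a :: complex) else 0)"
      using True by (auto simp: choose_one)
    ultimately show ?thesis unfolding e using True by simp
  next
    case False thus ?thesis unfolding e by simp
  qed
qed

lemma dF: assumes "a \<le> m" "b \<le> m"
  shows "((\<lambda>t. Mc m (expF t) a b) has_field_derivative (if b = a + 1 then of_nat (m - a) else 0)) (at 0)"
proof -
  have e: "(\<lambda>t. Mc m (expF t) a b) = (\<lambda>t. if a \<le> b then of_nat ((m - a) choose (b - a)) * t^(b-a) else 0)"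
    using Mc_F[OF assms] by (intro ext) simp
  show ?thesis
  proof (cases "a \<le> b")
    case True
    have "((\<lambda>t::complex. of_nat ((m - a) choose (b - a)) * t^(b-a)) has_field_derivative (if b - a = 1 then of_nat ((m - a) choose (b - a)) else 0)) (at 0)"
      by (rule deriv_pow0)
    moreover have "(if b - a = 1 then of_nat ((m - a) choose (b - a)) else 0) = (if b = a + 1 then (of_nat (m - a) :: complex) else 0)"
      using True by (auto simp: choose_one)
    ultimately show ?thesis unfolding e using True by simp
  next
    case False thus ?thesis unfolding e by simp
  qed
qed

lemma dH: assumes "a \<le> m" "b \<le> m"
  shows "((\<lambda>t. Mc m (expH t) a b) has_field_derivative (if b = a then of_nat a - of_nat (m - a) else 0)) (at 0)"
proof -
  have e: "(\<lambda>t. Mc m (expH t) a b) = (\<lambda>t. if b = a then exp ((of_nat a - of_nat (m - a)) * t) else 0)"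
  proof
    fix t :: complex
    have "exp t ^ a * exp (- t) ^ (m - a) = exp (of_nat a * t) * exp (of_nat (m - a) * (- t))"
      by (simp only: exp_of_nat_mult)
    also have "\<dots> = exp ((of_nat a - of_nat (m - a)) * t)"
      by (simp add: exp_add[symmetric] algebra_simps)
    finally show "Mc m (expH t) a b = (if b = a then exp ((of_nat a - of_nat (m - a)) * t) else 0)"
      using Mc_H[OF assms] by simp
  qed
  show ?thesis
  proof (cases "b = a")
    case True
    have "((\<lambda>t. exp ((of_nat a - of_nat (m - a)) * t)) has_field_derivative
        exp ((of_nat a - of_nat (m - a)) * 0) * ((of_nat a - of_nat (m - a)) * 1)) (at (0::complex))"
      by (rule DERIV_chain2[OF DERIV_exp], rule DERIV_cmult, rule DERIV_ident)
    thus ?thesis unfolding e using True by simp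
  next
    case False thus ?thesis unfolding e by simp
  qed
qed

lemma E0: "a \<le> m \<Longrightarrow> b \<le> m \<Longrightarrow> Mc m (expE 0) a b = (if a = b then 1 else 0)"
  by (auto simp: Mc_E)
lemma F0: "a \<le> m \<Longrightarrow> b \<le> m \<Longrightarrow> Mc m (expF 0) a b = (if a = b then 1 else 0)"
  by (auto simp: Mc_F)
lemma H0: "a \<le> m \<Longrightarrow> b \<le> m \<Longrightarrow> Mc m (expH 0) a b = (if a = b then 1 else 0)"
  by (auto simp: Mc_H)

lemma sub_len: assumes lam: "lam \<in> DD k l" and mu: "mu \<in> DD k l"
  shows "lam \<subseteq> mu \<longleftrightarrow> (\<forall>r. 1 \<le> r \<and> r \<le> k \<longrightarrow> len lam r \<le> len mu r)"
proof
  assume sub: "lam \<subseteq> mu"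
  have ym: "young mu" using mu by (simp add: DD_def)
  show "\<forall>r. 1 \<le> r \<and> r \<le> k \<longrightarrow> len lam r \<le> len mu r"
  proof (intro allI impI)
    fix r
    have "{c. (r, c) \<in> lam} \<subseteq> {c. (r, c) \<in> mu}" using sub by auto
    thus "len lam r \<le> len mu r" unfolding len_def by (rule card_mono[OF row_finite[OF ym]])
  qed
next
  assume h: "\<forall>r. 1 \<le> r \<and> r \<le> k \<longrightarrow> len lam r \<le> len mu r"
  show "lam \<subseteq> mu"
  proof
    fix x assume x: "x \<in> lam"
    obtain r c where rc: "x = (r, c)" by fastforce
    have "r \<le> k" using x rc lam by (auto simp: DD_def rect_def)
    moreover have "1 \<le> r \<and> 1 \<le> c \<and> c \<le> len lam r" using mem_iff_len[of lam r c] x rc lam by (simp add: DD_def)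
    ultimately have "1 \<le> r \<and> 1 \<le> c \<and> c \<le> len mu r" using h by (meson le_trans)
    thus "x \<in> mu" using mem_iff_len[of mu r c] rc mu by (simp add: DD_def)
  qed
qed

definition Rrow :: "nat \<Rightarrow> diagram \<Rightarrow> diagram \<Rightarrow> nat \<Rightarrow> bool" where
  "Rrow k lam mu r0 \<longleftrightarrow> r0 \<in> {1..k} \<and> len mu r0 = len lam r0 + 1 \<and> (\<forall>r\<in>{1..k}-{r0}. len mu r = len lam r)"

lemma sum_one_nat: assumes "finite A" "(\<Sum>r\<in>A. d r) = (1::nat)"
  shows "\<exists>r0\<in>A. d r0 = 1 \<and> (\<forall>r\<in>A-{r0}. d r = 0)"
proof -
  have "\<exists>r\<in>A. d r \<noteq> 0"
  proof (rule ccontr)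
    assume "\<not> (\<exists>r\<in>A. d r \<noteq> 0)"
    hence "(\<Sum>r\<in>A. d r) = 0" by simp
    thus False using assms(2) by simp
  qed
  then obtain r0 where r0: "r0 \<in> A" "d r0 \<noteq> 0" by blast
  have "(\<Sum>r\<in>A. d r) = d r0 + (\<Sum>r\<in>A-{r0}. d r)" using sum.remove[OF assms(1) r0(1)] .
  hence "d r0 = 1" "(\<Sum>r\<in>A-{r0}. d r) = 0" using assms(2) r0(2) by linarith+
  thus ?thesis using r0(1) assms(1) by auto
qed

lemma cov_iff: assumes lam: "lam \<in> DD k l" and mu: "mu \<in> DD k l"
  shows "lam \<nearrow> mu \<longleftrightarrow> (\<exists>r0. Rrow k lam mu r0)"
proof
  assume c: "lam \<nearrow> mu"
  hence sub: "lam \<subseteq> mu" and cd: "card mu = card lam + 1" by (auto simp: covers_def)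
  have le: "r \<in> {1..k} \<Longrightarrow> len lam r \<le> len mu r" for r using sub_len[OF lam mu] sub by auto
  define d where "d r = len mu r - len lam r" for r
  have "(\<Sum>r=1..k. len mu r) = (\<Sum>r=1..k. len lam r + d r)"
    by (rule sum.cong) (use le in \<open>auto simp: d_def\<close>)
  hence "(\<Sum>r=1..k. len mu r) = (\<Sum>r=1..k. len lam r) + (\<Sum>r=1..k. d r)" by (simp add: sum.distrib)
  hence "(\<Sum>r=1..k. d r) = 1" using cd card_DD[OF lam] card_DD[OF mu] by simp
  then obtain r0 where r0: "r0 \<in> {1..k}" "d r0 = 1" "\<forall>r\<in>{1..k}-{r0}. d r = 0"
    using sum_one_nat[of "{1..k}" d] by auto
  have "len mu r0 = len lam r0 + 1" using r0(2) le[OF r0(1)] unfolding d_def by arith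
  moreover have "\<forall>r\<in>{1..k}-{r0}. len mu r = len lam r"
  proof
    fix r assume r: "r \<in> {1..k}-{r0}"
    hence "d r = 0" "len lam r \<le> len mu r" using r0(3) le by auto
    thus "len mu r = len lam r" unfolding d_def by arith
  qed
  ultimately have "Rrow k lam mu r0" unfolding Rrow_def using r0(1) by blast
  thus "\<exists>r0. Rrow k lam mu r0" by blast
next
  assume "\<exists>r0. Rrow k lam mu r0"
  then obtain r0 where R: "Rrow k lam mu r0" by blast
  have r0: "r0 \<in> {1..k}" using R by (simp add: Rrow_def)
  have le: "\<forall>r. 1 \<le> r \<and> r \<le> k \<longrightarrow> len lam r \<le> len mu r"
  proof (intro allI impI)
    fix r assume "1 \<le> r \<and> r \<le> k"
    thus "len lam r \<le> len mu r" by (cases "r = r0") (use R in \<open>auto simp: Rrow_def\<close>)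
  qed
  have sub: "lam \<subseteq> mu" using sub_len[OF lam mu] le by simp
  have "card mu = len mu r0 + (\<Sum>r\<in>{1..k}-{r0}. len mu r)"
    using card_DD[OF mu] sum.remove[OF finite_atLeastAtMost r0, of "len mu"] by simp
  also have "\<dots> = len lam r0 + 1 + (\<Sum>r\<in>{1..k}-{r0}. len lam r)"
    using R unfolding Rrow_def by simp
  also have "\<dots> = card lam + 1"
    using card_DD[OF lam] sum.remove[OF finite_atLeastAtMost r0, of "len lam"] by simp
  finally show "lam \<nearrow> mu" using sub lam mu by (simp add: covers_def DD_def)
qed

lemma Rrow_unique: assumes "Rrow k lam mu r" "Rrow k lam mu r'" shows "r = r'"
proof (rule ccontr)
  assume ne: "r \<noteq> r'"
  have "r' \<in> {1..k}-{r}" using assms(2) ne by (auto simp: Rrow_def)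
  hence "len mu r' = len lam r'" using assms(1) by (simp add: Rrow_def)
  moreover have "len mu r' = len lam r' + 1" using assms(2) by (simp add: Rrow_def)
  ultimately show False by simp
qed

lemma memDD: assumes "mu \<in> DD k l" shows "(r, c) \<in> mu \<longleftrightarrow> r \<in> {1..k} \<and> c \<in> {1..len mu r}"
proof -
  have "((r, c) \<in> mu) = ((r, c) \<in> Sigma {1..k} (\<lambda>r. {1..len mu r}))"
    using DD_eq[OF assms] by (rule arg_cong[where f = "\<lambda>S. (r, c) \<in> S"])
  thus ?thesis by simp
qed

lemma diff_Rrow: assumes lam: "lam \<in> DD k l" and mu: "mu \<in> DD k l" and R: "Rrow k lam mu r0"
  shows "mu - lam = {(r0, len mu r0)}"
proof -
  have r0: "r0 \<in> {1..k}" using R by (simp add: Rrow_def)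
  show ?thesis
  proof (rule set_eqI)
    fix x :: "nat \<times> nat" obtain r c where x: "x = (r, c)" by fastforce
    have "x \<in> mu - lam \<longleftrightarrow> r \<in> {1..k} \<and> 1 \<le> c \<and> c \<le> len mu r \<and> \<not> c \<le> len lam r"
      using memDD[OF mu, of r c] memDD[OF lam, of r c] x by auto
    also have "\<dots> \<longleftrightarrow> r = r0 \<and> c = len mu r0"
      using R r0 unfolding Rrow_def by (cases "r = r0") auto
    finally show "x \<in> mu - lam \<longleftrightarrow> x \<in> {(r0, len mu r0)}" using x by simp
  qed
qed

lemma inc_upd_iff:
  assumes lam: "lam \<in> DD k l" and mu: "mu \<in> DD k l" and j: "j < k"
  shows "(1 \<le> inc k mu j \<and> inc k lam = (inc k mu)(j := inc k mu j - 1)) \<longleftrightarrow> Rrow k lam mu (k - j)"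
proof
  assume h: "1 \<le> inc k mu j \<and> inc k lam = (inc k mu)(j := inc k mu j - 1)"
  have hi: "inc k lam i = (if i = j then inc k mu j - 1 else inc k mu i)" for i using h by simp
  have "len lam (k - j) + j = len mu (k - j) + j - 1"
    using hi[of j] j by (simp add: inc_lt)
  moreover have "1 \<le> len mu (k - j) + j" using h j by (simp add: inc_lt)
  ultimately have a: "len mu (k - j) = len lam (k - j) + 1" by arith
  have b: "len mu r = len lam r" if r: "r \<in> {1..k}-{k - j}" for r
  proof -
    have "k - r < k" "k - r \<noteq> j" using r j by auto
    hence "inc k lam (k - r) = inc k mu (k - r)" using hi[of "k - r"] by simp
    thus ?thesis using r by (simp add: inc_lt) linarith
  qed
  show "Rrow k lam mu (k - j)" unfolding Rrow_def using a b j by auto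
next
  assume R: "Rrow k lam mu (k - j)"
  have a: "len mu (k - j) = len lam (k - j) + 1" using R by (simp add: Rrow_def)
  have b: "len mu r = len lam r" if "r \<in> {1..k}" "r \<noteq> k - j" for r using R that by (simp add: Rrow_def)
  have "inc k lam i = ((inc k mu)(j := inc k mu j - 1)) i" for i
  proof (cases "i < k")
    case True
    show ?thesis
    proof (cases "i = j")
      case True thus ?thesis using a j by (simp add: inc_lt)
    next
      case False
      hence "len mu (k - i) = len lam (k - i)" using b[of "k - i"] \<open>i < k\<close> j by auto
      thus ?thesis using False \<open>i < k\<close> by (simp add: inc_lt)
    qed
  next
    case False thus ?thesis using j by (auto simp: inc_def)
  qed
  moreover have "1 \<le> inc k mu j" using a j by (simp add: inc_lt)
  ultimately show "1 \<le> inc k mu j \<and> inc k lam = (inc k mu)(j := inc k mu j - 1)" by auto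
qed

lemma young_box: assumes y: "young lam" and x: "(i, j) \<in> lam" shows "i \<le> card lam \<and> j \<le> card lam"
proof -
  have p: "1 \<le> i" "1 \<le> j" using young_pos[OF y x] by auto
  have "(\<lambda>a. (a, 1)) ` {1..i} \<subseteq> lam" using young_down[OF y x] p by auto
  hence "card ((\<lambda>a. (a, 1::nat)) ` {1..i}) \<le> card lam" using card_mono young_finite[OF y] by blast
  moreover have "card ((\<lambda>a. (a, 1::nat)) ` {1..i}) = i" by (subst card_image) (auto simp: inj_on_def)
  moreover have "(\<lambda>a. (1, a)) ` {1..j} \<subseteq> lam" using young_down[OF y x] p by auto
  hence "card ((\<lambda>a. (1::nat, a)) ` {1..j}) \<le> card lam" using card_mono young_finite[OF y] by blast
  moreover have "card ((\<lambda>a. (1::nat, a)) ` {1..j}) = j" by (subst card_image) (auto simp: inj_on_def)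
  ultimately show ?thesis by simp
qed

lemma finite_up: "finite {lam. mu \<nearrow> lam}"
proof -
  let ?N = "card mu + 1"
  have "{lam. mu \<nearrow> lam} \<subseteq> Pow ({1..?N} \<times> {1..?N})"
  proof
    fix lam assume "lam \<in> {lam. mu \<nearrow> lam}"
    hence c: "mu \<nearrow> lam" by simp
    have y: "young lam" and cd: "card lam = ?N" using c by (auto simp: covers_def)
    show "lam \<in> Pow ({1..?N} \<times> {1..?N})"
      using young_box[OF y] young_pos[OF y] cd by fastforce
  qed
  thus ?thesis by (rule finite_subset) simp
qed

definition wfn :: "nat \<Rightarrow> nat \<Rightarrow> complex" where
  "wfn m x = (-1)^x * of_nat (fact (m - x))"

lemma wfn_nz: "wfn m x \<noteq> 0" by (simp add: wfn_def)

lemma wt_wf: "wt k l mu = (\<Prod>i<k. wfn (k + l - 1) (inc k mu i))"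
  by (simp add: wt_def wfn_def)

lemma wt_upd:
  assumes j: "j < k" and e: "inc k lam = (inc k mu)(j := y)"
  shows "wt k l lam * wfn (k+l-1) (inc k mu j) = wt k l mu * wfn (k+l-1) y"
proof -
  let ?w = "wfn (k+l-1)"
  have P: "(\<Prod>i\<in>{..<k}-{j}. ?w (inc k lam i)) = (\<Prod>i\<in>{..<k}-{j}. ?w (inc k mu i))"
    by (rule prod.cong[OF refl]) (simp add: e)
  have "wt k l lam = ?w (inc k lam j) * (\<Prod>i\<in>{..<k}-{j}. ?w (inc k lam i))"
    unfolding wt_wf using prod.remove[of "{..<k}" j "\<lambda>i. ?w (inc k lam i)"] j by simp
  moreover have "wt k l mu = ?w (inc k mu j) * (\<Prod>i\<in>{..<k}-{j}. ?w (inc k mu i))"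
    unfolding wt_wf using prod.remove[of "{..<k}" j "\<lambda>i. ?w (inc k mu i)"] j by simp
  moreover have "inc k lam j = y" using e by simp
  ultimately show ?thesis using P by (simp add: mult_ac)
qed

lemma wfn_dec: assumes "1 \<le> x" "x \<le> m" shows "wfn m (x - 1) = - of_nat (m - x + 1) * wfn m x"
proof -
  have e1: "m - (x - 1) = Suc (m - x)" using assms by simp
  have e2: "(-1::complex) ^ (x - 1) = - ((-1) ^ x)"
  proof -
    have "(-1::complex) ^ x = (-1) ^ (Suc (x - 1))" using assms(1) by simp
    thus ?thesis by simp
  qed
  have "wfn m (x - 1) = - ((-1) ^ x) * (of_nat (Suc (m - x)) * of_nat (fact (m - x)))"
    unfolding wfn_def e1 e2 by (simp only: fact_Suc of_nat_mult of_nat_id)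
  also have "\<dots> = - of_nat (m - x + 1) * wfn m x" unfolding wfn_def by (simp add: algebra_simps)
  finally show ?thesis .
qed

lemma inc_le_m: "mu \<in> DD k l \<Longrightarrow> j < k \<Longrightarrow> inc k mu j \<le> k + l - 1"
  using Tset_le[OF inc_T] by blast

lemma perlam_E:
  assumes k: "k > 0" and lam: "lam \<in> DD k l" and mu: "mu \<in> DD k l"
  shows "(\<Sum>j<k. if 1 \<le> inc k mu j \<and> (inc k mu)(j := inc k mu j - 1) = inc k lam
            then of_nat (inc k mu j) * wt k l lam / wt k l mu else 0)
    = (if lam \<nearrow> mu then gen_poch (of_nat k) (mu - lam) * gen_poch (- of_nat l) (mu - lam) else 0)"
proof (cases "lam \<nearrow> mu")
  case True
  then obtain r0 where R: "Rrow k lam mu r0" using cov_iff[OF lam mu] by blast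
  have r0: "1 \<le> r0" "r0 \<le> k" using R by (auto simp: Rrow_def)
  define j0 where "j0 = k - r0"
  have j0: "j0 < k" using r0 by (simp add: j0_def)
  have cond: "(1 \<le> inc k mu j \<and> (inc k mu)(j := inc k mu j - 1) = inc k lam) \<longleftrightarrow> j = j0" if j: "j < k" for j
  proof -
    have "(1 \<le> inc k mu j \<and> (inc k mu)(j := inc k mu j - 1) = inc k lam) \<longleftrightarrow> Rrow k lam mu (k - j)"
      using inc_upd_iff[OF lam mu j] by (auto simp: eq_commute)
    also have "\<dots> \<longleftrightarrow> k - j = r0" using Rrow_unique[OF _ R] R by blast
    also have "\<dots> \<longleftrightarrow> j = j0" using j r0 by (auto simp: j0_def)
    finally show ?thesis .
  qed
  define x where "x = inc k mu j0"
  have x: "x = len mu r0 + j0" "1 \<le> x" "x \<le> k + l - 1"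
    using cond[OF j0] j0 inc_le_m[OF mu j0] r0 by (auto simp: x_def inc_lt j0_def)
  have el: "inc k lam = (inc k mu)(j0 := x - 1)" using cond[OF j0] by (simp add: x_def)
  have "wt k l lam * wfn (k+l-1) x = wt k l mu * wfn (k+l-1) (x - 1)"
    using wt_upd[OF j0 el] by (simp add: x_def)
  also have "\<dots> = wt k l mu * (- of_nat (k + l - 1 - x + 1) * wfn (k+l-1) x)" using wfn_dec[OF x(2,3)] by simp
  also have "\<dots> = (- of_nat (k + l - 1 - x + 1) * wt k l mu) * wfn (k+l-1) x" by (simp add: mult_ac)
  finally have wtl: "wt k l lam = - of_nat (k + l - 1 - x + 1) * wt k l mu"
    using mult_right_cancel[OF wfn_nz[of "k+l-1" x]] by blast
  have "(\<Sum>j<k. if 1 \<le> inc k mu j \<and> (inc k mu)(j := inc k mu j - 1) = inc k lam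
            then of_nat (inc k mu j) * wt k l lam / wt k l mu else 0)
        = (\<Sum>j<k. if j = j0 then of_nat x * wt k l lam / wt k l mu else 0)"
  proof (rule sum.cong[OF refl])
    fix j assume "j \<in> {..<k}"
    hence j: "j < k" by simp
    show "(if 1 \<le> inc k mu j \<and> (inc k mu)(j := inc k mu j - 1) = inc k lam
            then of_nat (inc k mu j) * wt k l lam / wt k l mu else 0) =
          (if j = j0 then of_nat x * wt k l lam / wt k l mu else 0)"
      by (simp only: cond[OF j]) (simp add: x_def)
  qed
  also have "\<dots> = of_nat x * wt k l lam / wt k l mu" using j0 by simp
  also have "\<dots> = of_nat x * (- of_nat (k + l - 1 - x + 1) * wt k l mu) / wt k l mu" by (simp only: wtl)
  also have "\<dots> = (of_nat x * (- of_nat (k + l - 1 - x + 1))) * wt k l mu / wt k l mu" by (simp only: mult.assoc)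
  also have "\<dots> = of_nat x * (- of_nat (k + l - 1 - x + 1))" using wt_nz[of k l mu] by (rule nonzero_mult_div_cancel_right)
  also have "\<dots> = - of_nat x * of_nat (k + l - 1 - x + 1)" by (simp add: algebra_simps)
  also have "\<dots> = gen_poch (of_nat k) (mu - lam) * gen_poch (- of_nat l) (mu - lam)"
  proof -
    have d: "mu - lam = {(r0, len mu r0)}" using diff_Rrow[OF lam mu R] .
    have c: "of_int (content (r0, len mu r0)) = (of_nat x - of_nat k :: complex)"
      using x(1) r0 by (simp add: content_def j0_def of_nat_diff)
    have n: "of_nat (k + l - 1 - x + 1) = (of_nat k + of_nat l - of_nat x :: complex)"
      using x(3) k by (simp add: of_nat_diff)
    have g: "gen_poch (of_nat k) (mu - lam) * gen_poch (- of_nat l) (mu - lam) =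
        (of_nat k + (of_nat x - of_nat k)) * (- of_nat l + (of_nat x - of_nat k))"
      unfolding d gen_poch_def by (simp add: c)
    show ?thesis unfolding g n by (simp add: algebra_simps)
  qed
  finally show ?thesis using True by simp
next
  case False
  have "\<not> (1 \<le> inc k mu j \<and> (inc k mu)(j := inc k mu j - 1) = inc k lam)" if j: "j < k" for j
  proof
    assume "1 \<le> inc k mu j \<and> (inc k mu)(j := inc k mu j - 1) = inc k lam"
    hence "Rrow k lam mu (k - j)" using inc_upd_iff[OF lam mu j] by (auto simp: eq_commute)
    thus False using False cov_iff[OF lam mu] by blast
  qed
  thus ?thesis using False by (auto intro!: sum.neutral)
qed

lemma perlam_F:
  assumes k: "k > 0" and lam: "lam \<in> DD k l" and mu: "mu \<in> DD k l"
  shows "(\<Sum>j<k. if inc k mu j < k + l - 1 \<and> (inc k mu)(j := inc k mu j + 1) = inc k lam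
            then of_nat (k + l - 1 - inc k mu j) * wt k l lam / wt k l mu else 0)
    = (if mu \<nearrow> lam then -1 else 0)"
proof -
  have rel: "(inc k mu j < k + l - 1 \<and> (inc k mu)(j := inc k mu j + 1) = inc k lam) \<longleftrightarrow>
      (1 \<le> inc k lam j \<and> inc k mu = (inc k lam)(j := inc k lam j - 1))" if j: "j < k" for j
  proof
    assume h: "inc k mu j < k + l - 1 \<and> (inc k mu)(j := inc k mu j + 1) = inc k lam"
    hence "inc k lam j = inc k mu j + 1" by (metis fun_upd_same)
    moreover have "(inc k lam)(j := inc k mu j) = inc k mu" using h by (metis fun_upd_triv fun_upd_upd)
    ultimately show "1 \<le> inc k lam j \<and> inc k mu = (inc k lam)(j := inc k lam j - 1)" by simp
  next
    assume h: "1 \<le> inc k lam j \<and> inc k mu = (inc k lam)(j := inc k lam j - 1)"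
    hence a: "inc k mu j = inc k lam j - 1" by simp
    have "inc k lam j \<le> k + l - 1" using inc_le_m[OF lam j] .
    hence "inc k mu j < k + l - 1" using a h by linarith
    moreover have "(inc k mu)(j := inc k mu j + 1) = inc k lam"
      using h a by (simp add: fun_upd_upd)
    ultimately show "inc k mu j < k + l - 1 \<and> (inc k mu)(j := inc k mu j + 1) = inc k lam" by simp
  qed
  show ?thesis
  proof (cases "mu \<nearrow> lam")
    case True
    then obtain r0 where R: "Rrow k mu lam r0" using cov_iff[OF mu lam] by blast
    have r0: "1 \<le> r0" "r0 \<le> k" using R by (auto simp: Rrow_def)
    define j0 where "j0 = k - r0"
    have j0: "j0 < k" using r0 by (simp add: j0_def)
    have cond: "(inc k mu j < k + l - 1 \<and> (inc k mu)(j := inc k mu j + 1) = inc k lam) \<longleftrightarrow> j = j0"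
      if j: "j < k" for j
    proof -
      have "(inc k mu j < k + l - 1 \<and> (inc k mu)(j := inc k mu j + 1) = inc k lam) \<longleftrightarrow> Rrow k mu lam (k - j)"
        using rel[OF j] inc_upd_iff[OF mu lam j] by simp
      also have "\<dots> \<longleftrightarrow> k - j = r0" using Rrow_unique[OF _ R] R by blast
      also have "\<dots> \<longleftrightarrow> j = j0" using j r0 by (auto simp: j0_def)
      finally show ?thesis .
    qed
    define x where "x = inc k mu j0"
    have x: "x < k + l - 1" "(inc k mu)(j0 := x + 1) = inc k lam" using cond[OF j0] by (auto simp: x_def)
    have A: "wt k l lam * wfn (k+l-1) x = wt k l mu * wfn (k+l-1) (x + 1)"
      using wt_upd[OF j0 x(2)[symmetric]] by (simp add: x_def)
    have ce: "k + l - 1 - (x+1) + 1 = k + l - 1 - x" using x(1) by simp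
    have B: "wfn (k+l-1) x = - of_nat (k + l - 1 - x) * wfn (k+l-1) (x + 1)"
      using wfn_dec[of "x+1" "k+l-1"] x(1) unfolding ce by simp
    have "(wt k l lam * (- of_nat (k + l - 1 - x))) * wfn (k+l-1) (x + 1) = wt k l lam * wfn (k+l-1) x"
      unfolding B by (simp only: mult.assoc)
    hence "(wt k l lam * (- of_nat (k + l - 1 - x))) * wfn (k+l-1) (x + 1) = wt k l mu * wfn (k+l-1) (x + 1)"
      using A by simp
    hence h: "wt k l lam * (- of_nat (k + l - 1 - x)) = wt k l mu"
      using mult_right_cancel[OF wfn_nz[of "k+l-1" "x+1"]] by blast
    have "of_nat (k + l - 1 - x) * wt k l lam = - (wt k l lam * (- of_nat (k + l - 1 - x)))"
      by (simp add: algebra_simps)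
    also have "\<dots> = - wt k l mu" using h by simp
    finally have "of_nat (k + l - 1 - x) * wt k l lam = - wt k l mu" .
    hence val: "of_nat (k + l - 1 - x) * wt k l lam / wt k l mu = -1"
      using wt_nz[of k l mu] by simp
    have "(\<Sum>j<k. if inc k mu j < k + l - 1 \<and> (inc k mu)(j := inc k mu j + 1) = inc k lam
            then of_nat (k + l - 1 - inc k mu j) * wt k l lam / wt k l mu else 0)
        = (\<Sum>j<k. if j = j0 then of_nat (k + l - 1 - x) * wt k l lam / wt k l mu else 0)"
    proof (rule sum.cong[OF refl])
      fix j assume "j \<in> {..<k}"
      hence j: "j < k" by simp
      show "(if inc k mu j < k + l - 1 \<and> (inc k mu)(j := inc k mu j + 1) = inc k lam
            then of_nat (k + l - 1 - inc k mu j) * wt k l lam / wt k l mu else 0) =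
          (if j = j0 then of_nat (k + l - 1 - x) * wt k l lam / wt k l mu else 0)"
        by (simp only: cond[OF j]) (simp add: x_def)
    qed
    also have "\<dots> = -1" using j0 val by simp
    finally show ?thesis using True by simp
  next
    case False
    have "\<not> (inc k mu j < k + l - 1 \<and> (inc k mu)(j := inc k mu j + 1) = inc k lam)" if j: "j < k" for j
    proof
      assume "inc k mu j < k + l - 1 \<and> (inc k mu)(j := inc k mu j + 1) = inc k lam"
      hence "Rrow k mu lam (k - j)" using rel[OF j] inc_upd_iff[OF mu lam j] by simp
      thus False using False cov_iff[OF mu lam] by blast
    qed
    thus ?thesis using False by (auto intro!: sum.neutral)
  qed
qed

lemma gauss2: "(\<Sum>j<k. j) * 2 + k = k * (k::nat)"
  by (induction k) (auto simp: algebra_simps)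

lemma sum_len_rev: "(\<Sum>j<k. len mu (k - j)) = (\<Sum>r=1..k. len mu r)"
  by (rule sum.reindex_bij_witness[of _ "\<lambda>r. k - r" "\<lambda>j. k - j"]) auto

lemma H_sum:
  assumes k: "k > 0" and mu: "mu \<in> DD k l"
  shows "(\<Sum>j<k. (of_nat (inc k mu j) - of_nat (k + l - 1 - inc k mu j) :: complex))
     = of_nat k * (- of_nat l) + 2 * of_nat (card mu)"
proof -
  have "(\<Sum>j<k. (of_nat (inc k mu j) - of_nat (k + l - 1 - inc k mu j) :: complex))
      = (\<Sum>j<k. 2 * of_nat (inc k mu j) - (of_nat k + of_nat l - 1))"
  proof (rule sum.cong[OF refl])
    fix j assume "j \<in> {..<k}"
    hence xle: "inc k mu j \<le> k + l - 1" using inc_le_m[OF mu] by simp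
    have "of_nat (k + l - 1 - inc k mu j) = (of_nat (k + l - 1) - of_nat (inc k mu j) :: complex)"
      using xle by (rule of_nat_diff)
    moreover have "of_nat (k + l - 1) = (of_nat k + of_nat l - 1 :: complex)" using k by (simp add: of_nat_diff)
    ultimately show "(of_nat (inc k mu j) - of_nat (k + l - 1 - inc k mu j) :: complex) =
        2 * of_nat (inc k mu j) - (of_nat k + of_nat l - 1)" by simp
  qed
  also have "\<dots> = 2 * of_nat (\<Sum>j<k. inc k mu j) - of_nat k * (of_nat k + of_nat l - 1)"
    by (simp add: sum_subtractf sum_distrib_left)
  also have "(\<Sum>j<k. inc k mu j) = card mu + (\<Sum>j<k. j)"
  proof -
    have "(\<Sum>j<k. inc k mu j) = (\<Sum>j<k. len mu (k - j) + j)" by (rule sum.cong) (auto simp: inc_lt)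
    also have "\<dots> = (\<Sum>j<k. len mu (k - j)) + (\<Sum>j<k. j)" by (simp add: sum.distrib)
    finally show ?thesis using card_DD[OF mu] sum_len_rev by simp
  qed
  also have "2 * of_nat (card mu + (\<Sum>j<k. j)) = (2 * of_nat (card mu) + (of_nat (k * k) - of_nat k) :: complex)"
  proof -
    have "of_nat ((\<Sum>j<k. j) * 2 + k) = (of_nat (k * k) :: complex)" using gauss2 by metis
    hence "of_nat (\<Sum>j<k. j) * 2 = (of_nat (k * k) - of_nat k :: complex)" by (simp add: algebra_simps)
    thus ?thesis by (simp add: algebra_simps)
  qed
  finally show ?thesis by (simp add: algebra_simps)
qed

lemma weak_down: assumes s: "s \<in> Iset k l" and j: "j < k"
  shows "weak k (s(j := s j - 1))"
  unfolding weak_def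
proof (intro allI impI)
  fix a b assume ab: "a < b \<and> b < k"
  have lt: "s a < s b" using s ab by (simp add: Iset_def)
  show "(s(j := s j - 1)) a \<le> (s(j := s j - 1)) b"
  proof (cases "a = j")
    case True
    hence "b \<noteq> j" using ab by simp
    thus ?thesis using True lt by simp
  next
    case False
    show ?thesis
    proof (cases "b = j")
      case True thus ?thesis using False lt by simp
    next
      case False2: False thus ?thesis using False lt by simp
    qed
  qed
qed

lemma weak_up: assumes s: "s \<in> Iset k l" and j: "j < k"
  shows "weak k (s(j := s j + 1))"
  unfolding weak_def
proof (intro allI impI)
  fix a b assume ab: "a < b \<and> b < k"
  have lt: "s a < s b" using s ab by (simp add: Iset_def)
  show "(s(j := s j + 1)) a \<le> (s(j := s j + 1)) b"
  proof (cases "a = j")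
    case True
    hence "b \<noteq> j" using ab by simp
    thus ?thesis using True lt by simp
  next
    case False
    show ?thesis
    proof (cases "b = j")
      case True thus ?thesis using False lt by simp
    next
      case False2: False thus ?thesis using False lt by simp
    qed
  qed
qed

lemma sum_pred: fixes x m :: nat assumes "x \<le> m"
  shows "(\<Sum>v\<le>m. (if v + 1 = x then a else 0) * g v) = (if 1 \<le> x then a * g (x - 1) else (0::complex))"
proof (cases x)
  case 0 thus ?thesis by simp
next
  case (Suc y)
  have "(\<Sum>v\<le>m. (if v + 1 = x then a else 0) * g v) = (\<Sum>v\<le>m. if v = y then a * g v else 0)"
    by (rule sum.cong[OF refl]) (auto simp: Suc)
  also have "\<dots> = a * g y" using assms Suc by (simp add: sum.delta)
  finally show ?thesis using Suc by simp
qed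

lemma sum_succ: fixes x m :: nat assumes "x \<le> m"
  shows "(\<Sum>v\<le>m. (if v = x + 1 then a else 0) * g v) = (if x < m then a * g (x + 1) else (0::complex))"
proof -
  have "(\<Sum>v\<le>m. (if v = x + 1 then a else 0) * g v) = (\<Sum>v\<le>m. if v = x + 1 then a * g v else 0)"
    by (rule sum.cong[OF refl]) auto
  also have "\<dots> = (if x + 1 \<in> {..m} then a * g (x + 1) else 0)" by (rule sum.delta) simp
  also have "\<dots> = (if x < m then a * g (x + 1) else 0)" using assms by auto
  finally show ?thesis .
qed

lemma ifz2: "(if P then a else 0) * b = (if P then a * b else (0::complex))" by simp

lemma swap_if:
  fixes a :: "nat \<Rightarrow> complex" and bb g :: "'x \<Rightarrow> complex"
  assumes "finite J" "finite X"
  shows "(\<Sum>j\<in>J. if c j then a j * (\<Sum>x\<in>X. if e j x then bb x * g x else 0) else 0) / W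
       = (\<Sum>x\<in>X. (\<Sum>j\<in>J. if c j \<and> e j x then a j * bb x / W else 0) * g x)"
proof -
  have "(\<Sum>j\<in>J. if c j then a j * (\<Sum>x\<in>X. if e j x then bb x * g x else 0) else 0) / W
      = (\<Sum>j\<in>J. \<Sum>x\<in>X. if c j \<and> e j x then a j * bb x / W * g x else 0)"
    unfolding sum_divide_distrib
  proof (rule sum.cong[OF refl])
    fix j assume "j \<in> J"
    show "(if c j then a j * (\<Sum>x\<in>X. if e j x then bb x * g x else 0) else 0) / W =
        (\<Sum>x\<in>X. if c j \<and> e j x then a j * bb x / W * g x else 0)"
    proof (cases "c j")
      case True
      have "a j * (\<Sum>x\<in>X. if e j x then bb x * g x else 0) / W = (\<Sum>x\<in>X. a j * (if e j x then bb x * g x else 0) / W)"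
        by (simp add: sum_distrib_left sum_divide_distrib)
      also have "\<dots> = (\<Sum>x\<in>X. if c j \<and> e j x then a j * bb x / W * g x else 0)"
        by (rule sum.cong[OF refl]) (simp add: True)
      finally show ?thesis using True by simp
    qed simp
  qed
  also have "\<dots> = (\<Sum>x\<in>X. \<Sum>j\<in>J. if c j \<and> e j x then a j * bb x / W * g x else 0)"
    by (rule sum.swap)
  also have "\<dots> = (\<Sum>x\<in>X. (\<Sum>j\<in>J. if c j \<and> e j x then a j * bb x / W else 0) * g x)"
    by (rule sum.cong[OF refl]) (simp only: sum_distrib_right ifz2)
  finally show ?thesis .
qed

lemma opE_zero: assumes f: "f \<in> Vkl k l" and mu: "mu \<notin> DD k l"
  shows "opE (of_nat k) (- of_nat l) f mu = 0"
  using opE_inv[OF f refl refl] mu by (auto simp: Vkl_def DD_def)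

lemma opF_zero: assumes f: "f \<in> Vkl k l" and mu: "mu \<notin> DD k l"
  shows "opF f mu = 0"
  using opF_inv[OF f] mu by (auto simp: Vkl_def DD_def)

lemma opH_zero: assumes f: "f \<in> Vkl k l" and mu: "mu \<notin> DD k l"
  shows "opH z z' f mu = 0"
  using opH_inv[OF f] mu by (auto simp: Vkl_def DD_def)

lemma f_zero: "f \<in> Vkl k l \<Longrightarrow> lam \<notin> DD k l \<Longrightarrow> f lam = 0"
  by (auto simp: Vkl_def DD_def)

lemma derivE:
  assumes k: "k > 0" and f: "f \<in> Vkl k l"
  shows "((\<lambda>t. rho k l (expE t) f mu) has_field_derivative opE (of_nat k) (- of_nat l) f mu) (at 0)"
proof (cases "mu \<in> DD k l")
  case False
  have "(\<lambda>t. rho k l (expE t) f mu) = (\<lambda>t. 0)" by (simp add: rho_def Psi_def False)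
  thus ?thesis using opE_zero[OF f False] by simp
next
  case True
  let ?s = "inc k mu" let ?m = "k + l - 1"
  have sI: "?s \<in> Iset k l" using inc_I[OF True] .
  have e: "(\<lambda>t. rho k l (expE t) f mu) = (\<lambda>t. rho0 k l (expE t) (Phi k l f) ?s / wt k l mu)"
    by (simp add: rho_def Psi_def True)
  have d: "((\<lambda>t. rho0 k l (expE t) (Phi k l f) ?s) has_field_derivative
      (\<Sum>j<k. \<Sum>v\<le>?m. (if v + 1 = ?s j then of_nat (?s j) else 0) * Phi k l f (?s(j := v)))) (at 0)"
  proof (rule rho0_deriv[OF inc_T[OF True], where D = "\<lambda>a b. if b + 1 = a then of_nat a else 0"])
    fix a b assume ab: "a \<le> k + l - 1" "b \<le> k + l - 1"
    show "((\<lambda>t. Mc (k+l-1) (expE t) a b) has_field_derivative (if b + 1 = a then of_nat a else 0)) (at 0)"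
      by (rule dE[OF ab])
    show "Mc (k+l-1) (expE 0) a b = (if a = b then 1 else 0)" by (rule E0[OF ab])
  qed
  have "(\<Sum>j<k. \<Sum>v\<le>?m. (if v + 1 = ?s j then of_nat (?s j) else 0) * Phi k l f (?s(j := v)))
     = (\<Sum>j<k. if 1 \<le> ?s j then of_nat (?s j) *
          (\<Sum>lam\<in>DD k l. if ?s(j := ?s j - 1) = inc k lam then wt k l lam * f lam else 0) else 0)"
  proof (rule sum.cong[OF refl])
    fix j assume "j \<in> {..<k}" hence j: "j < k" by simp
    have "(\<Sum>v\<le>?m. (if v + 1 = ?s j then of_nat (?s j) else 0) * Phi k l f (?s(j := v)))
      = (if 1 \<le> ?s j then of_nat (?s j) * Phi k l f (?s(j := ?s j - 1)) else 0)"
      by (rule sum_pred[OF inc_le_m[OF True j]])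
    also have "\<dots> = (if 1 \<le> ?s j then of_nat (?s j) *
          (\<Sum>lam\<in>DD k l. if ?s(j := ?s j - 1) = inc k lam then wt k l lam * f lam else 0) else 0)"
      using Phi_weak[OF weak_down[OF sI j]] by simp
    finally show "(\<Sum>v\<le>?m. (if v + 1 = ?s j then of_nat (?s j) else 0) * Phi k l f (?s(j := v))) =
       (if 1 \<le> ?s j then of_nat (?s j) *
          (\<Sum>lam\<in>DD k l. if ?s(j := ?s j - 1) = inc k lam then wt k l lam * f lam else 0) else 0)" .
  qed
  hence "(\<Sum>j<k. \<Sum>v\<le>?m. (if v + 1 = ?s j then of_nat (?s j) else 0) * Phi k l f (?s(j := v))) / wt k l mu
     = (\<Sum>lam\<in>DD k l. (\<Sum>j<k. if 1 \<le> ?s j \<and> ?s(j := ?s j - 1) = inc k lam then of_nat (?s j) * wt k l lam / wt k l mu else 0) * f lam)"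
    using swap_if[OF finite_lessThan finite_DD] by simp
  also have "\<dots> = (\<Sum>lam\<in>DD k l. (if lam \<nearrow> mu then gen_poch (of_nat k) (mu - lam) * gen_poch (- of_nat l) (mu - lam) else 0) * f lam)"
  proof (rule sum.cong[OF refl])
    fix lam assume lam: "lam \<in> DD k l"
    show "(\<Sum>j<k. if 1 \<le> ?s j \<and> ?s(j := ?s j - 1) = inc k lam then of_nat (?s j) * wt k l lam / wt k l mu else 0) * f lam
      = (if lam \<nearrow> mu then gen_poch (of_nat k) (mu - lam) * gen_poch (- of_nat l) (mu - lam) else 0) * f lam"
      by (simp only: perlam_E[OF k lam True])
  qed
  also have "\<dots> = (\<Sum>lam\<in>{lam \<in> DD k l. lam \<nearrow> mu}. gen_poch (of_nat k) (mu - lam) * gen_poch (- of_nat l) (mu - lam) * f lam)"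
    by (simp add: sum.inter_filter finite_DD ifz2)
  also have "{lam \<in> DD k l. lam \<nearrow> mu} = {lam. lam \<nearrow> mu}"
    using True by (auto simp: covers_def DD_def)
  also have "(\<Sum>lam\<in>{lam. lam \<nearrow> mu}. gen_poch (of_nat k) (mu - lam) * gen_poch (- of_nat l) (mu - lam) * f lam)
      = opE (of_nat k) (- of_nat l) f mu" by (simp add: opE_def)
  finally have val: "(\<Sum>j<k. \<Sum>v\<le>?m. (if v + 1 = ?s j then of_nat (?s j) else 0) * Phi k l f (?s(j := v))) / wt k l mu
     = opE (of_nat k) (- of_nat l) f mu" .
  show ?thesis unfolding e using DERIV_cdivide[OF d, of "wt k l mu"] val by simp
qed

lemma derivF:
  assumes k: "k > 0" and f: "f \<in> Vkl k l"
  shows "((\<lambda>t. rho k l (expF t) f mu) has_field_derivative opF f mu) (at 0)"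
proof (cases "mu \<in> DD k l")
  case False
  have "(\<lambda>t. rho k l (expF t) f mu) = (\<lambda>t. 0)" by (simp add: rho_def Psi_def False)
  thus ?thesis using opF_zero[OF f False] by simp
next
  case True
  let ?s = "inc k mu" let ?m = "k + l - 1"
  have sI: "?s \<in> Iset k l" using inc_I[OF True] .
  have e: "(\<lambda>t. rho k l (expF t) f mu) = (\<lambda>t. rho0 k l (expF t) (Phi k l f) ?s / wt k l mu)"
    by (simp add: rho_def Psi_def True)
  have d: "((\<lambda>t. rho0 k l (expF t) (Phi k l f) ?s) has_field_derivative
      (\<Sum>j<k. \<Sum>v\<le>?m. (if v = ?s j + 1 then of_nat (?m - ?s j) else 0) * Phi k l f (?s(j := v)))) (at 0)"
  proof (rule rho0_deriv[OF inc_T[OF True], where D = "\<lambda>a b. if b = a + 1 then of_nat (k + l - 1 - a) else 0"])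
    fix a b assume ab: "a \<le> k + l - 1" "b \<le> k + l - 1"
    show "((\<lambda>t. Mc (k+l-1) (expF t) a b) has_field_derivative (if b = a + 1 then of_nat (k + l - 1 - a) else 0)) (at 0)"
      by (rule dF[OF ab])
    show "Mc (k+l-1) (expF 0) a b = (if a = b then 1 else 0)" by (rule F0[OF ab])
  qed
  have "(\<Sum>j<k. \<Sum>v\<le>?m. (if v = ?s j + 1 then of_nat (?m - ?s j) else 0) * Phi k l f (?s(j := v)))
     = (\<Sum>j<k. if ?s j < ?m then of_nat (?m - ?s j) *
          (\<Sum>lam\<in>DD k l. if ?s(j := ?s j + 1) = inc k lam then wt k l lam * f lam else 0) else 0)"
  proof (rule sum.cong[OF refl])
    fix j assume "j \<in> {..<k}" hence j: "j < k" by simp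
    have "(\<Sum>v\<le>?m. (if v = ?s j + 1 then of_nat (?m - ?s j) else 0) * Phi k l f (?s(j := v)))
      = (if ?s j < ?m then of_nat (?m - ?s j) * Phi k l f (?s(j := ?s j + 1)) else 0)"
      by (rule sum_succ[OF inc_le_m[OF True j]])
    also have "\<dots> = (if ?s j < ?m then of_nat (?m - ?s j) *
          (\<Sum>lam\<in>DD k l. if ?s(j := ?s j + 1) = inc k lam then wt k l lam * f lam else 0) else 0)"
      using Phi_weak[OF weak_up[OF sI j]] by simp
    finally show "(\<Sum>v\<le>?m. (if v = ?s j + 1 then of_nat (?m - ?s j) else 0) * Phi k l f (?s(j := v))) =
       (if ?s j < ?m then of_nat (?m - ?s j) *
          (\<Sum>lam\<in>DD k l. if ?s(j := ?s j + 1) = inc k lam then wt k l lam * f lam else 0) else 0)" .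
  qed
  hence "(\<Sum>j<k. \<Sum>v\<le>?m. (if v = ?s j + 1 then of_nat (?m - ?s j) else 0) * Phi k l f (?s(j := v))) / wt k l mu
     = (\<Sum>lam\<in>DD k l. (\<Sum>j<k. if ?s j < ?m \<and> ?s(j := ?s j + 1) = inc k lam then of_nat (?m - ?s j) * wt k l lam / wt k l mu else 0) * f lam)"
    using swap_if[OF finite_lessThan finite_DD] by simp
  also have "\<dots> = (\<Sum>lam\<in>DD k l. (if mu \<nearrow> lam then -1 else 0) * f lam)"
  proof (rule sum.cong[OF refl])
    fix lam assume lam: "lam \<in> DD k l"
    show "(\<Sum>j<k. if ?s j < ?m \<and> ?s(j := ?s j + 1) = inc k lam then of_nat (?m - ?s j) * wt k l lam / wt k l mu else 0) * f lam
      = (if mu \<nearrow> lam then -1 else 0) * f lam"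
      by (simp only: perlam_F[OF k lam True])
  qed
  also have "\<dots> = - (\<Sum>lam\<in>{lam \<in> DD k l. mu \<nearrow> lam}. f lam)"
  proof -
    have "(\<Sum>lam\<in>DD k l. (if mu \<nearrow> lam then -1 else 0) * f lam) = (\<Sum>lam\<in>DD k l. - (if mu \<nearrow> lam then f lam else 0))"
      by (rule sum.cong) auto
    also have "\<dots> = - (\<Sum>lam\<in>DD k l. if mu \<nearrow> lam then f lam else 0)" by (simp add: sum_negf)
    also have "\<dots> = - (\<Sum>lam\<in>{lam \<in> DD k l. mu \<nearrow> lam}. f lam)" by (simp add: sum.inter_filter finite_DD)
    finally show ?thesis .
  qed
  also have "(\<Sum>lam\<in>{lam \<in> DD k l. mu \<nearrow> lam}. f lam) = (\<Sum>lam\<in>{lam. mu \<nearrow> lam}. f lam)"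
    by (rule sum.mono_neutral_right[OF finite_up, symmetric]) (use f in \<open>auto simp: Vkl_def DD_def\<close>)
  also have "- (\<Sum>lam\<in>{lam. mu \<nearrow> lam}. f lam) = opF f mu" by (simp add: opF_def)
  finally have val: "(\<Sum>j<k. \<Sum>v\<le>?m. (if v = ?s j + 1 then of_nat (?m - ?s j) else 0) * Phi k l f (?s(j := v))) / wt k l mu
     = opF f mu" .
  show ?thesis unfolding e using DERIV_cdivide[OF d, of "wt k l mu"] val by simp
qed

lemma derivH:
  assumes k: "k > 0" and f: "f \<in> Vkl k l"
  shows "((\<lambda>t. rho k l (expH t) f mu) has_field_derivative opH (of_nat k) (- of_nat l) f mu) (at 0)"
proof (cases "mu \<in> DD k l")
  case False
  have "(\<lambda>t. rho k l (expH t) f mu) = (\<lambda>t. 0)" by (simp add: rho_def Psi_def False)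
  thus ?thesis using opH_zero[OF f False] by simp
next
  case True
  let ?s = "inc k mu" let ?m = "k + l - 1"
  have e: "(\<lambda>t. rho k l (expH t) f mu) = (\<lambda>t. rho0 k l (expH t) (Phi k l f) ?s / wt k l mu)"
    by (simp add: rho_def Psi_def True)
  have d: "((\<lambda>t. rho0 k l (expH t) (Phi k l f) ?s) has_field_derivative
      (\<Sum>j<k. \<Sum>v\<le>?m. (if v = ?s j then of_nat (?s j) - of_nat (?m - ?s j) else 0) * Phi k l f (?s(j := v)))) (at 0)"
  proof (rule rho0_deriv[OF inc_T[OF True], where D = "\<lambda>a b. if b = a then of_nat a - of_nat (k + l - 1 - a) else 0"])
    fix a b assume ab: "a \<le> k + l - 1" "b \<le> k + l - 1"
    show "((\<lambda>t. Mc (k+l-1) (expH t) a b) has_field_derivative (if b = a then of_nat a - of_nat (k + l - 1 - a) else 0)) (at 0)"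
      by (rule dH[OF ab])
    show "Mc (k+l-1) (expH 0) a b = (if a = b then 1 else 0)" by (rule H0[OF ab])
  qed
  have "(\<Sum>j<k. \<Sum>v\<le>?m. (if v = ?s j then of_nat (?s j) - of_nat (?m - ?s j) else 0) * Phi k l f (?s(j := v)))
     = (\<Sum>j<k. (of_nat (?s j) - of_nat (?m - ?s j)) * Phi k l f ?s)"
  proof (rule sum.cong[OF refl])
    fix j assume "j \<in> {..<k}" hence j: "j < k" by simp
    have "(\<Sum>v\<le>?m. (if v = ?s j then of_nat (?s j) - of_nat (?m - ?s j) else 0) * Phi k l f (?s(j := v)))
       = (\<Sum>v\<le>?m. if v = ?s j then (of_nat (?s j) - of_nat (?m - ?s j)) * Phi k l f (?s(j := v)) else 0)"
      by (rule sum.cong[OF refl]) simp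
    also have "\<dots> = (of_nat (?s j) - of_nat (?m - ?s j)) * Phi k l f ?s"
      using inc_le_m[OF True j] by (simp add: sum.delta)
    finally show "(\<Sum>v\<le>?m. (if v = ?s j then of_nat (?s j) - of_nat (?m - ?s j) else 0) * Phi k l f (?s(j := v)))
       = (of_nat (?s j) - of_nat (?m - ?s j)) * Phi k l f ?s" .
  qed
  also have "\<dots> = (\<Sum>j<k. (of_nat (?s j) - of_nat (?m - ?s j))) * (wt k l mu * f mu)"
    by (simp add: sum_distrib_right Phi_inc[OF True])
  also have "\<dots> = (of_nat k * (- of_nat l) + 2 * of_nat (card mu)) * (wt k l mu * f mu)"
    using H_sum[OF k True] by simp
  finally have "(\<Sum>j<k. \<Sum>v\<le>?m. (if v = ?s j then of_nat (?s j) - of_nat (?m - ?s j) else 0) * Phi k l f (?s(j := v))) / wt k l mu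
     = opH (of_nat k) (- of_nat l) f mu"
    using wt_nz[of k l mu] by (simp add: opH_def size_diag_def)
  thus ?thesis unfolding e using DERIV_cdivide[OF d, of "wt k l mu"] by simp
qed

lemma cont_rho: "continuous_on S (\<lambda>A. rho k l A f mu)"
proof (cases "mu \<in> DD k l")
  case True
  have e: "(\<lambda>A. rho k l A f mu) = (\<lambda>A. rho0 k l A (Phi k l f) (inc k mu) / wt k l mu)"
    by (simp add: rho_def Psi_def True)
  show ?thesis unfolding e by (intro continuous_intros cont_rho0) (simp add: wt_nz)
next
  case False
  have e: "(\<lambda>A. rho k l A f mu) = (\<lambda>A. 0)" by (simp add: rho_def Psi_def False)
  show ?thesis unfolding e by (rule continuous_on_const)
qed

theorem lemma4p3:
  fixes k l :: nat and z z' :: complex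
  assumes "k > 0" and "l > 0"
    and "z = of_nat k" and "z' = - of_nat l"
  shows "(\<forall>f\<in>Vkl k l. opE z z' f \<in> Vkl k l \<and> opF f \<in> Vkl k l \<and> opH z z' f \<in> Vkl k l)
    \<and> (\<exists>rho. is_SL2_lift rho (Vkl k l) (opE z z') opF (opH z z'))"
proof
  show "\<forall>f\<in>Vkl k l. opE z z' f \<in> Vkl k l \<and> opF f \<in> Vkl k l \<and> opH z z' f \<in> Vkl k l"
    using opE_inv[OF _ assms(3,4)] opF_inv opH_inv by blast
  have "is_SL2_lift (rho k l) (Vkl k l) (opE z z') opF (opH z z')"
    unfolding is_SL2_lift_def assms(3,4)
  proof (intro conjI ballI allI)
    fix f assume f: "f \<in> Vkl k l"
    fix mu
    show "((\<lambda>t. rho k l (expE t) f mu) has_field_derivative opE (of_nat k) (- of_nat l) f mu) (at 0)"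
      by (rule derivE[OF assms(1) f])
    show "((\<lambda>t. rho k l (expF t) f mu) has_field_derivative opF f mu) (at 0)"
      by (rule derivF[OF assms(1) f])
    show "((\<lambda>t. rho k l (expH t) f mu) has_field_derivative opH (of_nat k) (- of_nat l) f mu) (at 0)"
      by (rule derivH[OF assms(1) f])
    show "continuous_on SL2 (\<lambda>A. rho k l A f mu)" by (rule cont_rho)
  next
    fix f assume f: "f \<in> Vkl k l"
    show "rho k l (mat 1) f = f" by (rule rho_id[OF f])
  next
    fix A B f assume "f \<in> Vkl k l"
    thus "rho k l (A ** B) f = rho k l A (rho k l B f)" by (rule rho_mult)
  next
    fix A f g c
    show "rho k l A f \<in> Vkl k l" by (rule rho_V)
    show "rho k l A (\<lambda>mu. f mu + g mu) = (\<lambda>mu. rho k l A f mu + rho k l A g mu)" by (rule rho_add)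
    show "rho k l A (\<lambda>mu. c * f mu) = (\<lambda>mu. c * rho k l A f mu)" by (rule rho_scale)
  qed
  thus "\<exists>rho. is_SL2_lift rho (Vkl k l) (opE z z') opF (opH z z')" by blast
qed

end
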